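(* Let $H$ and $K$ be $2$-connected cubic graphs, where $H$ is a snark with $\pi(H)\ge 5$ and $K$ is a $3$-edge-colourable quasi-bipartite graph with a bipartising set $U$. Let $G=H\oplus_3 K$ be a $3$-sum with distinguished vertices $u\in V(H)$ and $v\in V(K)$, where $\{v\}$ is a component of $K-U$ (so $v$ forms a trivial component of the quasi-partite set of $K$). Then: (i) $\pi(G)\ge 5$; (ii) $G$ is quasi-bipartite with bipartising set $U$ (inherited from $K$), and $H-u$ is an element of the corresponding quasi-partite set of $G$, replacing $\{v\}$.
   Context: Graphs are finite; loops and multiple edges are allowed. A snark is a $2$-connected cubic graph with no proper $3$-edge-colouring. The perfect matching index $\pi(G)$ is the smallest number of perfect matchings of $G$ whose union is $E(G)$. A $2$-connected cubic graph $K$ is quasi-bipartite if it contains an independent vertex set $U$ with $|U|\ge 2$ such that contracting each component of $K-U$ to a vertex yields a bipartite cubic graph (possibly with multiple edges) with partite sets $U$ and the set of contracted vertices; $U$ is a bipartising set and the set of components of $K-U$ is the quasi-partite set. A $3$-sum $H\oplus_3 K$ with distinguished vertices $u,v$ deletes $u$ and $v$ and joins the three dangling edge-ends formerly at $u$ bijectively to the three formerly at $v$. *)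

theory Defs
  imports Main "HOL-Library.Extended_Nat"
begin

text \<open>Finite multigraphs (loops and parallel edges allowed) are given by a vertex
  set V, an edge set E and an end map g assigning to each edge its two ends
  (a loop has equal ends).\<close>

definition wf_graph :: "'v set \<Rightarrow> 'e set \<Rightarrow> ('e \<Rightarrow> 'v \<times> 'v) \<Rightarrow> bool" where
  "wf_graph V E g \<longleftrightarrow> finite V \<and> finite E \<and> (\<forall>e\<in>E. fst (g e) \<in> V \<and> snd (g e) \<in> V)"

text \<open>Degree: a loop contributes 2.\<close>
definition deg :: "'v set \<Rightarrow> 'e set \<Rightarrow> ('e \<Rightarrow> 'v \<times> 'v) \<Rightarrow> 'v \<Rightarrow> nat" where
  "deg V E g x = card {e\<in>E. fst (g e) = x} + card {e\<in>E. snd (g e) = x}"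

definition cubic :: "'v set \<Rightarrow> 'e set \<Rightarrow> ('e \<Rightarrow> 'v \<times> 'v) \<Rightarrow> bool" where
  "cubic V E g \<longleftrightarrow> wf_graph V E g \<and> (\<forall>x\<in>V. deg V E g x = 3)"

definition incident :: "('e \<Rightarrow> 'v \<times> 'v) \<Rightarrow> 'e \<Rightarrow> 'v \<Rightarrow> bool" where
  "incident g e x \<longleftrightarrow> fst (g e) = x \<or> snd (g e) = x"

definition adj_rel :: "'v set \<Rightarrow> 'e set \<Rightarrow> ('e \<Rightarrow> 'v \<times> 'v) \<Rightarrow> ('v \<times> 'v) set" where
  "adj_rel W F g = {(x, y). x \<in> W \<and> y \<in> W \<and> (\<exists>e\<in>F. g e = (x, y) \<or> g e = (y, x))}"

definition connected_on :: "'v set \<Rightarrow> 'e set \<Rightarrow> ('e \<Rightarrow> 'v \<times> 'v) \<Rightarrow> bool" where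
  "connected_on W F g \<longleftrightarrow> (\<forall>x\<in>W. \<forall>y\<in>W. (x, y) \<in> (adj_rel W F g)\<^sup>*)"

definition two_connected :: "'v set \<Rightarrow> 'e set \<Rightarrow> ('e \<Rightarrow> 'v \<times> 'v) \<Rightarrow> bool" where
  "two_connected V E g \<longleftrightarrow> wf_graph V E g \<and> card V \<ge> 2 \<and> connected_on V E g
     \<and> (\<forall>w\<in>V. connected_on (V - {w}) E g) \<and> (\<forall>e\<in>E. connected_on V (E - {e}) g)"

definition component :: "'v set \<Rightarrow> 'e set \<Rightarrow> ('e \<Rightarrow> 'v \<times> 'v) \<Rightarrow> 'v \<Rightarrow> 'v set" where
  "component W F g x = {y\<in>W. (x, y) \<in> (adj_rel W F g)\<^sup>*}"

definition components :: "'v set \<Rightarrow> 'e set \<Rightarrow> ('e \<Rightarrow> 'v \<times> 'v) \<Rightarrow> 'v set set" where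
  "components W F g = component W F g ` W"

definition perfect_matching :: "'v set \<Rightarrow> 'e set \<Rightarrow> ('e \<Rightarrow> 'v \<times> 'v) \<Rightarrow> 'e set \<Rightarrow> bool" where
  "perfect_matching V E g M \<longleftrightarrow> M \<subseteq> E \<and> (\<forall>e\<in>M. fst (g e) \<noteq> snd (g e))
     \<and> (\<forall>x\<in>V. card {e\<in>M. incident g e x} = 1)"

text \<open>Perfect matching index (infinite if E is not covered by perfect matchings).\<close>
definition pm_index :: "'v set \<Rightarrow> 'e set \<Rightarrow> ('e \<Rightarrow> 'v \<times> 'v) \<Rightarrow> enat" where
  "pm_index V E g = (INF Ms \<in> {Ms. (\<forall>M\<in>Ms. perfect_matching V E g M) \<and> \<Union>Ms = E}. enat (card Ms))"

definition three_edge_colourable :: "'v set \<Rightarrow> 'e set \<Rightarrow> ('e \<Rightarrow> 'v \<times> 'v) \<Rightarrow> bool" where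
  "three_edge_colourable V E g \<longleftrightarrow> (\<forall>e\<in>E. fst (g e) \<noteq> snd (g e)) \<and>
     (\<exists>c :: 'e \<Rightarrow> nat. (\<forall>e\<in>E. c e < 3) \<and>
        (\<forall>e\<in>E. \<forall>e'\<in>E. e \<noteq> e' \<and> (\<exists>x. incident g e x \<and> incident g e' x) \<longrightarrow> c e \<noteq> c e'))"

definition snark :: "'v set \<Rightarrow> 'e set \<Rightarrow> ('e \<Rightarrow> 'v \<times> 'v) \<Rightarrow> bool" where
  "snark V E g \<longleftrightarrow> two_connected V E g \<and> cubic V E g \<and> \<not> three_edge_colourable V E g"

definition bipartite_with :: "'w set \<Rightarrow> 'e set \<Rightarrow> ('e \<Rightarrow> 'w \<times> 'w) \<Rightarrow> 'w set \<Rightarrow> 'w set \<Rightarrow> bool" where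
  "bipartite_with V E g A B \<longleftrightarrow> A \<union> B = V \<and> A \<inter> B = {} \<and>
     (\<forall>e\<in>E. (fst (g e) \<in> A \<and> snd (g e) \<in> B) \<or> (fst (g e) \<in> B \<and> snd (g e) \<in> A))"

text \<open>Contraction of each component of G - U to a single vertex; vertices of the
  contracted graph are represented as sets: {u} for u in U, and the component C itself.\<close>
definition contr_class :: "'v set \<Rightarrow> 'e set \<Rightarrow> ('e \<Rightarrow> 'v \<times> 'v) \<Rightarrow> 'v set \<Rightarrow> 'v \<Rightarrow> 'v set" where
  "contr_class V E g U x = (if x \<in> U then {x} else component (V - U) E g x)"

definition contr_edges :: "'v set \<Rightarrow> 'e set \<Rightarrow> ('e \<Rightarrow> 'v \<times> 'v) \<Rightarrow> 'v set \<Rightarrow> 'e set" where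
  "contr_edges V E g U = {e\<in>E. contr_class V E g U (fst (g e)) \<noteq> contr_class V E g U (snd (g e))}"

definition contr_ends :: "'v set \<Rightarrow> 'e set \<Rightarrow> ('e \<Rightarrow> 'v \<times> 'v) \<Rightarrow> 'v set \<Rightarrow> 'e \<Rightarrow> 'v set \<times> 'v set" where
  "contr_ends V E g U e = map_prod (contr_class V E g U) (contr_class V E g U) (g e)"

definition bipartising_set :: "'v set \<Rightarrow> 'e set \<Rightarrow> ('e \<Rightarrow> 'v \<times> 'v) \<Rightarrow> 'v set \<Rightarrow> bool" where
  "bipartising_set V E g U \<longleftrightarrow> U \<subseteq> V \<and> card U \<ge> 2 \<and>
     (\<forall>e\<in>E. \<not> (fst (g e) \<in> U \<and> snd (g e) \<in> U)) \<and>
     cubic ((\<lambda>x. {x}) ` U \<union> components (V - U) E g) (contr_edges V E g U) (contr_ends V E g U) \<and>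
     bipartite_with ((\<lambda>x. {x}) ` U \<union> components (V - U) E g) (contr_edges V E g U) (contr_ends V E g U)
        ((\<lambda>x. {x}) ` U) (components (V - U) E g)"

definition quasi_partite_set :: "'v set \<Rightarrow> 'e set \<Rightarrow> ('e \<Rightarrow> 'v \<times> 'v) \<Rightarrow> 'v set \<Rightarrow> 'v set set" where
  "quasi_partite_set V E g U = components (V - U) E g"

definition quasi_bipartite :: "'v set \<Rightarrow> 'e set \<Rightarrow> ('e \<Rightarrow> 'v \<times> 'v) \<Rightarrow> bool" where
  "quasi_bipartite V E g \<longleftrightarrow> two_connected V E g \<and> cubic V E g \<and> (\<exists>U. bipartising_set V E g U)"

definition other_end :: "('e \<Rightarrow> 'v \<times> 'v) \<Rightarrow> 'e \<Rightarrow> 'v \<Rightarrow> 'v" where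
  "other_end g e x = (if fst (g e) = x then snd (g e) else fst (g e))"

text \<open>3-sum of H (vertices tagged Inl) and K (vertices tagged Inr) at u and v.
  sigma is the bijection from the edges at u to the edges at v; the new edge
  joining the dangling ends of e and sigma e is named Inl e.\<close>
definition sum3_V :: "'a set \<Rightarrow> 'a \<Rightarrow> 'b set \<Rightarrow> 'b \<Rightarrow> ('a + 'b) set" where
  "sum3_V VH u VK v = Inl ` (VH - {u}) \<union> Inr ` (VK - {v})"

definition sum3_E :: "'e set \<Rightarrow> ('e \<Rightarrow> 'a \<times> 'a) \<Rightarrow> 'a \<Rightarrow> 'f set \<Rightarrow> ('f \<Rightarrow> 'b \<times> 'b) \<Rightarrow> 'b \<Rightarrow> ('e + 'f) set" where
  "sum3_E EH gH u EK gK v = Inl ` EH \<union> Inr ` {f\<in>EK. \<not> incident gK f v}"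

definition sum3_g :: "('e \<Rightarrow> 'a \<times> 'a) \<Rightarrow> 'a \<Rightarrow> ('f \<Rightarrow> 'b \<times> 'b) \<Rightarrow> 'b \<Rightarrow> ('e \<Rightarrow> 'f)
     \<Rightarrow> ('e + 'f) \<Rightarrow> ('a + 'b) \<times> ('a + 'b)" where
  "sum3_g gH u gK v sigma x = (case x of
      Inl e \<Rightarrow> (if incident gH e u
                then (Inl (other_end gH e u), Inr (other_end gK (sigma e) v))
                else map_prod Inl Inl (gH e))
    | Inr f \<Rightarrow> map_prod Inr Inr (gK f))"

end

theory Submission
  imports Defs
begin


definition mult :: "('e \<Rightarrow> 'v \<times> 'v) \<Rightarrow> 'e \<Rightarrow> 'v \<Rightarrow> nat" where
  "mult g e x = (if fst (g e) = x then 1 else 0) + (if snd (g e) = x then 1 else 0)"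

definition nin :: "('e \<Rightarrow> 'v \<times> 'v) \<Rightarrow> 'e \<Rightarrow> 'v set \<Rightarrow> nat" where
  "nin g e S = (if fst (g e) \<in> S then 1 else 0) + (if snd (g e) \<in> S then 1 else 0)"

lemma card_filter_sum: "finite E \<Longrightarrow> card {e\<in>E. P e} = (\<Sum>e\<in>E. if P e then 1 else 0)"
  by (simp add: sum.If_cases Int_def conj_commute)

lemma deg_sum: "finite E \<Longrightarrow> deg V E g x = (\<Sum>e\<in>E. mult g e x)"
  unfolding deg_def mult_def by (simp add: sum.distrib card_filter_sum)

lemma handshake1: "finite S \<Longrightarrow> (\<Sum>x\<in>S. mult g e x) = nin g e S"
  unfolding mult_def nin_def by (simp add: sum.distrib)

lemma handshake: "finite S \<Longrightarrow> finite N \<Longrightarrow> (\<Sum>x\<in>S. \<Sum>e\<in>N. mult g e x) = (\<Sum>e\<in>N. nin g e S)"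
  by (subst sum.swap) (simp add: handshake1)

lemma adj_sym: "(x,y) \<in> adj_rel W F g \<Longrightarrow> (y,x) \<in> adj_rel W F g"
  unfolding adj_rel_def by auto

lemma adj_sym': "sym (adj_rel W F g)"
  by (meson adj_sym symI)

lemma rt_sym: "(x,y) \<in> (adj_rel W F g)\<^sup>* \<Longrightarrow> (y,x) \<in> (adj_rel W F g)\<^sup>*"
  by (meson adj_sym' sym_rtrancl symD)

lemma rt_in: "(x,y) \<in> (adj_rel W F g)\<^sup>* \<Longrightarrow> x \<in> W \<Longrightarrow> y \<in> W"
  by (induction rule: rtrancl_induct) (auto simp: adj_rel_def)

lemma hub_connected:
  assumes "\<And>p. p \<in> W \<Longrightarrow> (p, r) \<in> (adj_rel W F g)\<^sup>*"
  shows "connected_on W F g"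
  unfolding connected_on_def
proof (intro ballI)
  fix x y assume "x \<in> W" "y \<in> W"
  then have "(x, r) \<in> (adj_rel W F g)\<^sup>*" "(r, y) \<in> (adj_rel W F g)\<^sup>*" using assms[of x] assms[of y] rt_sym[of y r] by auto
  then show "(x, y) \<in> (adj_rel W F g)\<^sup>*" by (rule rtrancl_trans)
qed

lemma first_hit:
  assumes "(y,t) \<in> (adj_rel W F g)\<^sup>*" "y \<noteq> t" "y \<in> W"
  shows "\<exists>z e. z \<in> W \<and> z \<noteq> t \<and> e \<in> F \<and> (g e = (z,t) \<or> g e = (t,z)) \<and> (y,z) \<in> (adj_rel (W-{t}) F g)\<^sup>*"
  using assms
proof (induction rule: converse_rtrancl_induct)
  case base
  then show ?case by simp
next
  case (step y y')
  from step.hyps(1) obtain e where e: "e \<in> F" "g e = (y,y') \<or> g e = (y',y)" "y \<in> W" "y' \<in> W"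
    unfolding adj_rel_def by auto
  show ?case
  proof (cases "y' = t")
    case True
    have W1: "y \<in> W \<and> y \<noteq> t \<and> e \<in> F \<and> (g e = (y,t) \<or> g e = (t,y)) \<and> (y,y) \<in> (adj_rel (W-{t}) F g)\<^sup>*"
      using e step.prems True by auto
    show ?thesis by (intro exI) (rule W1)
  next
    case False
    from step.IH[OF False e(4)] obtain z e2 where z: "z \<in> W \<and> z \<noteq> t \<and> e2 \<in> F \<and> (g e2 = (z,t) \<or> g e2 = (t,z)) \<and> (y',z) \<in> (adj_rel (W-{t}) F g)\<^sup>*"
      by (elim exE) (rule that)
    have yy: "(y,y') \<in> adj_rel (W-{t}) F g" using e False step.prems unfolding adj_rel_def by auto
    have "(y',z) \<in> (adj_rel (W-{t}) F g)\<^sup>*" using z by blast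
    from converse_rtrancl_into_rtrancl[OF yy this] have "(y,z) \<in> (adj_rel (W-{t}) F g)\<^sup>*" .
    with z have W2: "z \<in> W \<and> z \<noteq> t \<and> e2 \<in> F \<and> (g e2 = (z,t) \<or> g e2 = (t,z)) \<and> (y,z) \<in> (adj_rel (W-{t}) F g)\<^sup>*" by simp
    show ?thesis by (intro exI) (rule W2)
  qed
qed

lemma transfer:
  assumes "(a,b) \<in> (adj_rel W F g)\<^sup>*" "\<phi> ` W \<subseteq> W'"
    "\<And>e. e\<in>F \<Longrightarrow> fst (g e) \<in> W \<Longrightarrow> snd (g e) \<in> W \<Longrightarrow> \<exists>e'\<in>F'. g' e' = map_prod \<phi> \<phi> (g e)"
  shows "(\<phi> a, \<phi> b) \<in> (adj_rel W' F' g')\<^sup>*"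
  using assms(1)
proof (induction rule: rtrancl_induct)
  case base then show ?case by simp
next
  case (step b c)
  from step.hyps(2) obtain e where e: "e \<in> F" "g e = (b,c) \<or> g e = (c,b)" "b \<in> W" "c \<in> W"
    unfolding adj_rel_def by auto
  from assms(3)[OF e(1)] e obtain e' where "e' \<in> F'" "g' e' = map_prod \<phi> \<phi> (g e)" by (auto simp del: map_prod_simp)
  then have "(\<phi> b, \<phi> c) \<in> adj_rel W' F' g'" using e assms(2) unfolding adj_rel_def by auto
  from rtrancl.rtrancl_into_rtrancl[OF step.IH this] show ?case .
qed

lemma adj_mono: "W \<subseteq> W' \<Longrightarrow> F \<subseteq> F' \<Longrightarrow> adj_rel W F g \<subseteq> adj_rel W' F' g"
  unfolding adj_rel_def by auto

lemma connected_mono: "connected_on W F g \<Longrightarrow> F \<subseteq> F' \<Longrightarrow> connected_on W F' g"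
proof -
  assume a: "connected_on W F g" "F \<subseteq> F'"
  have "(adj_rel W F g)\<^sup>* \<subseteq> (adj_rel W F' g)\<^sup>*" using a(2) adj_mono[of W W F F' g] by (intro rtrancl_mono) simp
  then show ?thesis using a(1) unfolding connected_on_def by blast
qed

lemma component_self: "x \<in> W \<Longrightarrow> x \<in> component W F g x"
  unfolding component_def by auto

lemma component_subset: "component W F g x \<subseteq> W"
  unfolding component_def by auto

lemma component_eq: "y \<in> component W F g x \<Longrightarrow> component W F g y = component W F g x"
proof -
  assume "y \<in> component W F g x"
  then have "(x,y) \<in> (adj_rel W F g)\<^sup>*" "(y,x) \<in> (adj_rel W F g)\<^sup>*" unfolding component_def using rt_sym by auto
  note xy = this(1) and yx = this(2)
  show ?thesis unfolding component_def
    by (auto intro: rtrancl_trans[OF xy] rtrancl_trans[OF yx])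
qed

lemma components_mem: "C \<in> components W F g \<Longrightarrow> x \<in> C \<Longrightarrow> component W F g x = C"
proof -
  assume "C \<in> components W F g" "x \<in> C"
  then obtain y where "C = component W F g y" unfolding components_def by auto
  then show ?thesis using component_eq[of x W F g y] \<open>x \<in> C\<close> by simp
qed

lemma components_sub: "C \<in> components W F g \<Longrightarrow> C \<subseteq> W"
  unfolding components_def component_def by auto

lemma noloop:
  assumes T: "two_connected V E g" and C: "cubic V E g" and e: "e \<in> E"
  shows "fst (g e) \<noteq> snd (g e)"
proof
  assume L: "fst (g e) = snd (g e)"
  define x where "x = fst (g e)"
  have fin: "finite V" "finite E" using T unfolding two_connected_def wf_graph_def by auto
  have xV: "x \<in> V" using T e unfolding two_connected_def wf_graph_def x_def by auto
  obtain y where y: "y \<in> V" "y \<noteq> x"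
  proof -
    have "\<not> V \<subseteq> {x}"
    proof
      assume "V \<subseteq> {x}"
      then have "card V \<le> card {x}" by (intro card_mono) simp_all
      then have "card V \<le> 1" by simp
      then show False using T unfolding two_connected_def by linarith
    qed
    then show ?thesis using that by blast
  qed
  have "(y,x) \<in> (adj_rel V E g)\<^sup>*" using T y xV unfolding two_connected_def connected_on_def by auto
  then obtain z e' where z: "z \<in> V" "z \<noteq> x" "e' \<in> E" "g e' = (z,x) \<or> g e' = (x,z)"
    using first_hit[of y x V E g] y by blast
  have "(z,x) \<in> (adj_rel V (E - {e'}) g)\<^sup>*" using T z xV unfolding two_connected_def connected_on_def by auto
  then obtain z2 e'' where z2: "z2 \<in> V" "z2 \<noteq> x" "e'' \<in> E - {e'}" "g e'' = (z2,x) \<or> g e'' = (x,z2)"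
    using first_hit[of z x V "E - {e'}" g] z by blast
  define A where "A = {f\<in>E. fst (g f) = x}"
  define B where "B = {f\<in>E. snd (g f) = x}"
  have fA: "finite A" "finite B" using fin A_def B_def by auto
  have "{e, e', e''} \<subseteq> A \<union> B" using e z z2 L unfolding A_def B_def x_def by auto
  moreover have "card {e, e', e''} = 3"
  proof -
    have d1: "e \<noteq> e'"
    proof
      assume "e = e'"
      then have "g e = (z,x) \<or> g e = (x,z)" using z by simp
      then show False using L z(2) x_def by (metis fst_conv snd_conv)
    qed
    have d2: "e \<noteq> e''"
    proof
      assume "e = e''"
      then have "g e = (z2,x) \<or> g e = (x,z2)" using z2 by simp
      then show False using L z2(2) x_def by (metis fst_conv snd_conv)
    qed
    have d3: "e' \<noteq> e''" using z2 by auto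
    show ?thesis using d1 d2 d3 by simp
  qed
  ultimately have c1: "card (A \<union> B) \<ge> 3" using card_mono[of "A \<union> B" "{e, e', e''}"] fA by simp
  have "e \<in> A \<inter> B" using e L unfolding A_def B_def x_def by auto
  then have "card (A \<inter> B) > 0" using fA by (subst card_gt_0_iff) auto
  then have c2: "card (A \<inter> B) \<ge> 1" by simp
  have "card A + card B = card (A \<union> B) + card (A \<inter> B)" by (rule card_Un_Int[OF fA(1) fA(2)])
  moreover have "deg V E g x = card A + card B" unfolding deg_def A_def B_def by simp
  moreover have "deg V E g x = 3" using C xV unfolding cubic_def by auto
  ultimately show False using c1 c2 by linarith
qed




locale S3 =
  fixes VH :: "'a set" and EH :: "'e set" and gH :: "'e \<Rightarrow> 'a \<times> 'a" and u :: 'a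
    and VK :: "'b set" and EK :: "'f set" and gK :: "'f \<Rightarrow> 'b \<times> 'b" and v :: 'b
    and U :: "'b set" and sigma :: "'e \<Rightarrow> 'f"
  assumes H2: "two_connected VH EH gH" and Hcub: "cubic VH EH gH"
    and K2: "two_connected VK EK gK" and Kcub: "cubic VK EK gK"
    and Knl: "\<forall>f\<in>EK. fst (gK f) \<noteq> snd (gK f)"
    and KU: "bipartising_set VK EK gK U"
    and u: "u \<in> VH" and v: "v \<in> VK"
    and vcomp: "{v} \<in> quasi_partite_set VK EK gK U"
    and sigma: "bij_betw sigma {e\<in>EH. incident gH e u} {f\<in>EK. incident gK f v}"
begin

abbreviation "VG \<equiv> sum3_V VH u VK v"
abbreviation "EG \<equiv> sum3_E EH gH u EK gK v"
abbreviation "gG \<equiv> sum3_g gH u gK v sigma"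
abbreviation "Cs \<equiv> components (VK - U) EK gK"
abbreviation "EK' \<equiv> {f\<in>EK. \<not> incident gK f v}"
abbreviation "oH e \<equiv> other_end gH e u"
abbreviation "oK f \<equiv> other_end gK f v"

lemma finH: "finite VH" "finite EH" and wfH: "\<And>e. e \<in> EH \<Longrightarrow> fst (gH e) \<in> VH \<and> snd (gH e) \<in> VH"
  using Hcub unfolding cubic_def wf_graph_def by auto

lemma finK: "finite VK" "finite EK" and wfK: "\<And>f. f \<in> EK \<Longrightarrow> fst (gK f) \<in> VK \<and> snd (gK f) \<in> VK"
  using Kcub unfolding cubic_def wf_graph_def by auto

lemma Hnl: "e \<in> EH \<Longrightarrow> fst (gH e) \<noteq> snd (gH e)"
  using noloop[OF H2 Hcub] by blast

lemma vcomp': "{v} \<in> Cs" using vcomp unfolding quasi_partite_set_def .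

lemma vU: "v \<notin> U" using components_sub[OF vcomp'] by auto

lemma UK: "U \<subseteq> VK" using KU unfolding bipartising_set_def by auto

lemma Uv: "U \<subseteq> VK - {v}" using UK vU by auto

lemma compv: "component (VK - U) EK gK v = {v}"
  using components_mem[OF vcomp'] by simp

lemma incH: "e \<in> EH \<Longrightarrow> incident gH e u \<Longrightarrow> oH e \<in> VH - {u} \<and> (gH e = (u, oH e) \<or> gH e = (oH e, u))"
  using Hnl[of e] wfH[of e] unfolding incident_def other_end_def by (cases "gH e") auto

lemma incK: "f \<in> EK \<Longrightarrow> incident gK f v \<Longrightarrow> oK f \<in> VK - {v} \<and> (gK f = (v, oK f) \<or> gK f = (oK f, v))"
  using Knl wfK[of f] unfolding incident_def other_end_def by (cases "gK f") auto

lemma incKU: "f \<in> EK \<Longrightarrow> incident gK f v \<Longrightarrow> oK f \<in> U"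
proof (rule ccontr)
  assume f: "f \<in> EK" "incident gK f v" "oK f \<notin> U"
  then have o: "oK f \<in> VK - {v}" "gK f = (v, oK f) \<or> gK f = (oK f, v)" using incK by auto
  then have "(v, oK f) \<in> adj_rel (VK - U) EK gK" using f vU v unfolding adj_rel_def by auto
  then have "oK f \<in> component (VK - U) EK gK v" unfolding component_def using o f by auto
  then show False using compv o by auto
qed

lemma nincH: "e \<in> EH \<Longrightarrow> \<not> incident gH e u \<Longrightarrow> fst (gH e) \<in> VH - {u} \<and> snd (gH e) \<in> VH - {u}"
  using wfH[of e] unfolding incident_def by auto

lemma nincK: "f \<in> EK \<Longrightarrow> \<not> incident gK f v \<Longrightarrow> fst (gK f) \<in> VK - {v} \<and> snd (gK f) \<in> VK - {v}"
  using wfK[of f] unfolding incident_def by auto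

lemma gG_nin: "\<not> incident gH e u \<Longrightarrow> gG (Inl e) = map_prod Inl Inl (gH e)"
  unfolding sum3_g_def by simp

lemma gG_cut: "incident gH e u \<Longrightarrow> gG (Inl e) = (Inl (oH e), Inr (oK (sigma e)))"
  unfolding sum3_g_def by simp

lemma gG_Inr: "gG (Inr f) = map_prod Inr Inr (gK f)"
  unfolding sum3_g_def by simp

lemma sig: "e \<in> EH \<Longrightarrow> incident gH e u \<Longrightarrow> sigma e \<in> EK \<and> incident gK (sigma e) v"
  using sigma unfolding bij_betw_def by auto

lemma EG_Inl[simp]: "Inl e \<in> EG \<longleftrightarrow> e \<in> EH" unfolding sum3_E_def by auto
lemma EG_Inr[simp]: "Inr f \<in> EG \<longleftrightarrow> f \<in> EK \<and> \<not> incident gK f v" unfolding sum3_E_def by auto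
lemma VG_Inl[simp]: "Inl x \<in> VG \<longleftrightarrow> x \<in> VH \<and> x \<noteq> u" unfolding sum3_V_def by auto
lemma VG_Inr[simp]: "Inr x \<in> VG \<longleftrightarrow> x \<in> VK \<and> x \<noteq> v" unfolding sum3_V_def by auto

lemma finG: "finite VG" "finite EG"
  unfolding sum3_V_def sum3_E_def using finH finK by auto

lemma wfG_edge: "x \<in> EG \<Longrightarrow> fst (gG x) \<in> VG \<and> snd (gG x) \<in> VG"
proof (cases x)
  case (Inl e)
  assume "x \<in> EG"
  then have e: "e \<in> EH" using Inl by simp
  show ?thesis
  proof (cases "incident gH e u")
    case True
    then show ?thesis using Inl gG_cut[OF True] incH[OF e True] incK[OF conjunct1[OF sig[OF e True]] conjunct2[OF sig[OF e True]]] by simp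
  next
    case False
    then show ?thesis using Inl gG_nin[OF False] nincH[OF e False] by (cases "gH e") simp
  qed
next
  case (Inr f)
  assume "x \<in> EG"
  then have f: "f \<in> EK" "\<not> incident gK f v" using Inr by auto
  show ?thesis using Inr gG_Inr[of f] nincK[OF f] by simp
qed

lemma wfG: "wf_graph VG EG gG"
  unfolding wf_graph_def using finG wfG_edge by auto

lemma sum_EG: "(\<Sum>x\<in>EG. h x) = (\<Sum>e\<in>EH. h (Inl e)) + (\<Sum>f\<in>EK'. h (Inr f))"
proof -
  have "EG = Inl ` EH \<union> Inr ` EK'" unfolding sum3_E_def by simp
  then have "(\<Sum>x\<in>EG. h x) = (\<Sum>x\<in>Inl ` EH \<union> Inr ` EK'. h x)" by simp
  also have "\<dots> = (\<Sum>x\<in>Inl ` EH. h x) + (\<Sum>x\<in>Inr ` EK'. h x)"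
    by (rule sum.union_disjoint) (use finH finK in auto)
  also have "\<dots> = (\<Sum>e\<in>EH. h (Inl e)) + (\<Sum>f\<in>EK'. h (Inr f))"
    by (simp add: sum.reindex)
  finally show ?thesis .
qed

lemma sum_EK: "(\<Sum>f\<in>EK. h f) = (\<Sum>f\<in>{f\<in>EK. incident gK f v}. h f) + (\<Sum>f\<in>EK'. h f)"
proof -
  have "EK = {f\<in>EK. incident gK f v} \<union> EK'" by auto
  then show ?thesis using finK by (metis (no_types, lifting) sum.union_disjoint disjoint_iff finite_Un mem_Collect_eq)
qed


lemma mult_Inl: "e \<in> EH \<Longrightarrow> x \<in> VH - {u} \<Longrightarrow> mult gG (Inl e) (Inl x) = mult gH e x"
proof (cases "incident gH e u")
  case True
  assume "e \<in> EH" "x \<in> VH - {u}"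
  then show ?thesis using gG_cut[OF True] incH[OF \<open>e \<in> EH\<close> True] by (auto simp: mult_def)
next
  case False
  then show ?thesis using gG_nin[OF False] by (cases "gH e") (auto simp: mult_def)
qed

lemma mult_Inr_Inl: "mult gG (Inr f) (Inl x) = 0"
  using gG_Inr[of f] by (cases "gK f") (auto simp: mult_def)

lemma mult_Inl_Inr: "e \<in> EH \<Longrightarrow> mult gG (Inl e) (Inr y) = (if incident gH e u then (if oK (sigma e) = y then 1 else 0) else 0)"
proof (cases "incident gH e u")
  case True
  then show ?thesis using gG_cut[OF True] by (auto simp: mult_def)
next
  case False
  then show ?thesis using gG_nin[OF False] by (cases "gH e") (auto simp: mult_def)
qed

lemma mult_Inr: "mult gG (Inr f) (Inr y) = mult gK f y"
  using gG_Inr[of f] by (cases "gK f") (auto simp: mult_def)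

lemma multK_inc: "f \<in> EK \<Longrightarrow> incident gK f v \<Longrightarrow> y \<noteq> v \<Longrightarrow> mult gK f y = (if oK f = y then 1 else 0)"
  using incK[of f] by (auto simp: mult_def)

lemma degG_Inl: "x \<in> VH - {u} \<Longrightarrow> deg VG EG gG (Inl x) = 3"
proof -
  assume x: "x \<in> VH - {u}"
  have "deg VG EG gG (Inl x) = (\<Sum>z\<in>EG. mult gG z (Inl x))" by (rule deg_sum[OF finG(2)])
  also have "\<dots> = (\<Sum>e\<in>EH. mult gG (Inl e) (Inl x)) + (\<Sum>f\<in>EK'. mult gG (Inr f) (Inl x))"
    by (rule sum_EG)
  also have "\<dots> = (\<Sum>e\<in>EH. mult gH e x)" using mult_Inl x mult_Inr_Inl by simp
  also have "\<dots> = deg VH EH gH x" by (simp add: deg_sum[OF finH(2)])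
  also have "\<dots> = 3" using Hcub x unfolding cubic_def by auto
  finally show ?thesis .
qed

lemma degG_Inr: "y \<in> VK - {v} \<Longrightarrow> deg VG EG gG (Inr y) = 3"
proof -
  assume y: "y \<in> VK - {v}"
  have "deg VG EG gG (Inr y) = (\<Sum>z\<in>EG. mult gG z (Inr y))" by (rule deg_sum[OF finG(2)])
  also have "\<dots> = (\<Sum>e\<in>EH. mult gG (Inl e) (Inr y)) + (\<Sum>f\<in>EK'. mult gG (Inr f) (Inr y))"
    by (rule sum_EG)
  also have "(\<Sum>e\<in>EH. mult gG (Inl e) (Inr y)) = (\<Sum>e\<in>EH. if incident gH e u then (if oK (sigma e) = y then 1 else 0) else 0)"
    using mult_Inl_Inr by simp
  also have "\<dots> = (\<Sum>e\<in>{e\<in>EH. incident gH e u}. (if oK (sigma e) = y then 1 else 0))"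
    using finH(2) by (simp add: sum.inter_filter)
  also have "\<dots> = (\<Sum>f\<in>{f\<in>EK. incident gK f v}. (if oK f = y then 1 else 0))"
    using sum.reindex_bij_betw[OF sigma, of "\<lambda>f. if oK f = y then 1 else 0"] by simp
  also have "\<dots> = (\<Sum>f\<in>{f\<in>EK. incident gK f v}. mult gK f y)"
    using multK_inc y by (intro sum.cong) auto
  also have "(\<Sum>f\<in>EK'. mult gG (Inr f) (Inr y)) = (\<Sum>f\<in>EK'. mult gK f y)"
    using mult_Inr by simp
  also have "(\<Sum>f\<in>{f\<in>EK. incident gK f v}. mult gK f y) + (\<Sum>f\<in>EK'. mult gK f y) = (\<Sum>f\<in>EK. mult gK f y)"
    by (rule sum_EK[symmetric])
  also have "\<dots> = deg VK EK gK y" by (simp add: deg_sum[OF finK(2)])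
  also have "\<dots> = 3" using Kcub y unfolding cubic_def by auto
  finally show ?thesis .
qed

lemma cubicG: "cubic VG EG gG"
  unfolding cubic_def
proof (intro conjI ballI)
  show "wf_graph VG EG gG" by (rule wfG)
  fix p assume "p \<in> VG"
  then show "deg VG EG gG p = 3"
    using degG_Inl degG_Inr by (cases p) auto
qed


lemma trH:
  assumes "(a,b) \<in> (adj_rel W F gH)\<^sup>*" "W \<subseteq> VH - {u}" "F \<subseteq> EH" "Inl ` W \<subseteq> W'" "Inl ` F \<subseteq> F'"
  shows "(Inl a, Inl b) \<in> (adj_rel W' F' gG)\<^sup>*"
proof (rule transfer[OF assms(1) assms(4)])
  fix e assume e: "e \<in> F" "fst (gH e) \<in> W" "snd (gH e) \<in> W"
  then have ni: "\<not> incident gH e u" using assms(2) unfolding incident_def by auto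
  have "Inl e \<in> F'" using e assms(5) by auto
  moreover have "gG (Inl e) = map_prod Inl Inl (gH e)" using gG_nin[OF ni] .
  ultimately show "\<exists>e'\<in>F'. gG e' = map_prod Inl Inl (gH e)" by blast
qed

lemma trK:
  assumes "(a,b) \<in> (adj_rel W F gK)\<^sup>*" "W \<subseteq> VK - {v}" "F \<subseteq> EK" "Inr ` W \<subseteq> W'" "Inr ` {f\<in>F. \<not> incident gK f v} \<subseteq> F'"
  shows "(Inr a, Inr b) \<in> (adj_rel W' F' gG)\<^sup>*"
proof (rule transfer[OF assms(1) assms(4)])
  fix f assume f: "f \<in> F" "fst (gK f) \<in> W" "snd (gK f) \<in> W"
  then have ni: "\<not> incident gK f v" using assms(2) unfolding incident_def by auto
  have "Inr f \<in> F'" using f ni assms(5) by auto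
  moreover have "gG (Inr f) = map_prod Inr Inr (gK f)" using gG_Inr .
  ultimately show "\<exists>e'\<in>F'. gG e' = map_prod Inr Inr (gK f)" by blast
qed

lemma cut_adj:
  assumes "e \<in> EH" "incident gH e u" "Inl (oH e) \<in> W'" "Inr (oK (sigma e)) \<in> W'" "Inl e \<in> F'"
  shows "(Inl (oH e), Inr (oK (sigma e))) \<in> adj_rel W' F' gG"
    "(Inr (oK (sigma e)), Inl (oH e)) \<in> adj_rel W' F' gG"
  using assms gG_cut[OF assms(2)] unfolding adj_rel_def by blast+

lemma oH_eq: "gH e = (z,u) \<or> gH e = (u,z) \<Longrightarrow> z \<noteq> u \<Longrightarrow> oH e = z \<and> incident gH e u"
  by (cases "gH e") (auto simp: other_end_def incident_def)

lemma oK_eq: "gK f = (z,v) \<or> gK f = (v,z) \<Longrightarrow> z \<noteq> v \<Longrightarrow> oK f = z \<and> incident gK f v"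
  by (cases "gK f") (auto simp: other_end_def incident_def)

lemma sig_inv: "f \<in> EK \<Longrightarrow> incident gK f v \<Longrightarrow> \<exists>e. e \<in> EH \<and> incident gH e u \<and> sigma e = f"
proof -
  assume "f \<in> EK" "incident gK f v"
  then have "f \<in> sigma ` {e\<in>EH. incident gH e u}" using sigma unfolding bij_betw_def by auto
  then show ?thesis by auto
qed

lemma cardU: "card U \<ge> 2" using KU unfolding bipartising_set_def by auto

lemma r0_ex: "\<exists>r. r \<in> U"
proof (rule ccontr)
  assume "\<not> (\<exists>r. r \<in> U)" then have "U = {}" by auto
  then show False using cardU by simp
qed

lemma h0_ex: "\<exists>h. h \<in> VH - {u}"
proof (rule ccontr)
  assume "\<not> (\<exists>h. h \<in> VH - {u})" then have "VH \<subseteq> {u}" by auto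
  then have "card VH \<le> card {u}" by (intro card_mono) simp_all
  then show False using H2 unfolding two_connected_def by simp
qed

definition "r0 = (SOME r. r \<in> U)"
definition "h0 = (SOME h. h \<in> VH - {u})"

lemma r0: "r0 \<in> U" unfolding r0_def using r0_ex by (rule someI_ex)
lemma h0: "h0 \<in> VH - {u}" unfolding h0_def using h0_ex by (rule someI_ex)

lemma Kv_conn: "connected_on (VK - {v}) EK gK" using K2 v unfolding two_connected_def by auto
lemma Hu_conn: "connected_on (VH - {u}) EH gH" using H2 u unfolding two_connected_def by auto

lemma reachInr:
  assumes "Inr ` (VK - {v}) \<subseteq> W'" "Inr ` EK' \<subseteq> F'" "y \<in> VK - {v}"
  shows "(Inr y, Inr r0) \<in> (adj_rel W' F' gG)\<^sup>*"
proof -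
  have "(y, r0) \<in> (adj_rel (VK - {v}) EK gK)\<^sup>*" using Kv_conn assms(3) r0 Uv unfolding connected_on_def by auto
  then show ?thesis by (rule trK) (use assms in auto)
qed

lemma reachInl:
  assumes "Inl ` (VH - {u}) \<subseteq> W'" "Inl ` EH \<subseteq> F'" "x \<in> VH - {u}"
  shows "(Inl x, Inl h0) \<in> (adj_rel W' F' gG)\<^sup>*"
proof -
  have "(x, h0) \<in> (adj_rel (VH - {u}) EH gH)\<^sup>*" using Hu_conn assms(3) h0 unfolding connected_on_def by auto
  then show ?thesis by (rule trH) (use assms in auto)
qed

lemma escH:
  assumes "(y,z) \<in> (adj_rel Wh Fh gH)\<^sup>*" "Wh \<subseteq> VH - {u}" "Fh \<subseteq> EH" "Inl ` Wh \<subseteq> W'" "Inl ` Fh \<subseteq> F'"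
    "e \<in> EH" "gH e = (z,u) \<or> gH e = (u,z)" "z \<noteq> u" "z \<in> Wh" "Inl e \<in> F'"
    "Inr ` (VK - {v}) \<subseteq> W'" "Inr ` EK' \<subseteq> F'"
  shows "(Inl y, Inr r0) \<in> (adj_rel W' F' gG)\<^sup>*"
proof -
  have 1: "(Inl y, Inl z) \<in> (adj_rel W' F' gG)\<^sup>*" by (rule trH[OF assms(1-5)])
  have oe: "oH e = z" "incident gH e u" using oH_eq[OF assms(7,8)] by auto
  have s: "sigma e \<in> EK" "incident gK (sigma e) v" using sig[OF assms(6) oe(2)] by auto
  have k: "oK (sigma e) \<in> VK - {v}" using incK[OF s] by auto
  have "(Inl (oH e), Inr (oK (sigma e))) \<in> adj_rel W' F' gG"
    by (rule cut_adj(1)) (use assms oe k in auto)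
  then have 2: "(Inl z, Inr (oK (sigma e))) \<in> adj_rel W' F' gG" using oe by simp
  have 3: "(Inr (oK (sigma e)), Inr r0) \<in> (adj_rel W' F' gG)\<^sup>*" by (rule reachInr[OF assms(11,12) k])
  from rtrancl_into_rtrancl[OF 1 2] have "(Inl y, Inr (oK (sigma e))) \<in> (adj_rel W' F' gG)\<^sup>*" .
  from rtrancl_trans[OF this 3] show ?thesis .
qed

lemma escK:
  assumes "(w,z) \<in> (adj_rel Wk Fk gK)\<^sup>*" "Wk \<subseteq> VK - {v}" "Fk \<subseteq> EK" "Inr ` Wk \<subseteq> W'" "Inr ` {f\<in>Fk. \<not> incident gK f v} \<subseteq> F'"
    "f \<in> EK" "gK f = (z,v) \<or> gK f = (v,z)" "z \<noteq> v" "z \<in> Wk"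
    "\<And>e. e \<in> EH \<Longrightarrow> sigma e = f \<Longrightarrow> Inl e \<in> F'"
    "Inl ` (VH - {u}) \<subseteq> W'" "Inl ` EH \<subseteq> F'"
  shows "(Inr w, Inl h0) \<in> (adj_rel W' F' gG)\<^sup>*"
proof -
  have 1: "(Inr w, Inr z) \<in> (adj_rel W' F' gG)\<^sup>*" by (rule trK[OF assms(1-5)])
  have oe: "oK f = z" "incident gK f v" using oK_eq[OF assms(7,8)] by auto
  obtain e where e: "e \<in> EH" "incident gH e u" "sigma e = f" using sig_inv[OF assms(6) oe(2)] by blast
  have k: "oH e \<in> VH - {u}" using incH[OF e(1,2)] by auto
  have "(Inr (oK (sigma e)), Inl (oH e)) \<in> adj_rel W' F' gG"
    by (rule cut_adj(2)) (use assms oe k e in auto)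
  then have 2: "(Inr z, Inl (oH e)) \<in> adj_rel W' F' gG" using oe e by simp
  have 3: "(Inl (oH e), Inl h0) \<in> (adj_rel W' F' gG)\<^sup>*" by (rule reachInl[OF assms(11,12) k])
  from rtrancl_into_rtrancl[OF 1 2] have "(Inr w, Inl (oH e)) \<in> (adj_rel W' F' gG)\<^sup>*" .
  from rtrancl_trans[OF this 3] show ?thesis .
qed


lemma VG_cases: "p \<in> VG \<Longrightarrow> (\<And>x. p = Inl x \<Longrightarrow> x \<in> VH - {u} \<Longrightarrow> P) \<Longrightarrow> (\<And>y. p = Inr y \<Longrightarrow> y \<in> VK - {v} \<Longrightarrow> P) \<Longrightarrow> P"
  by (cases p) auto

lemma connV1:
  assumes x: "x \<in> VH - {u}"
  shows "connected_on (VG - {Inl x}) EG gG"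
proof (rule hub_connected)
  fix p assume p: "p \<in> VG - {Inl x}"
  show "(p, Inr r0) \<in> (adj_rel (VG - {Inl x}) EG gG)\<^sup>*"
  proof (rule VG_cases[of p])
    show "p \<in> VG" using p by simp
  next
    fix y assume py: "p = Inr y" "y \<in> VK - {v}"
    have "(Inr y, Inr r0) \<in> (adj_rel (VG - {Inl x}) EG gG)\<^sup>*" by (rule reachInr) (use py in auto)
    then show ?thesis using py by simp
  next
    fix y assume py: "p = Inl y" "y \<in> VH - {u}"
    then have yx: "y \<noteq> x" using p by auto
    have "(y, u) \<in> (adj_rel (VH - {x}) EH gH)\<^sup>*" using H2 x u py yx unfolding two_connected_def connected_on_def by auto
    from first_hit[OF this] py yx obtain z e where
      z: "z \<in> VH - {x}" "z \<noteq> u" "e \<in> EH" "gH e = (z,u) \<or> gH e = (u,z)" "(y,z) \<in> (adj_rel (VH - {x} - {u}) EH gH)\<^sup>*"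
      by auto
    have "(Inl y, Inr r0) \<in> (adj_rel (VG - {Inl x}) EG gG)\<^sup>*"
      by (rule escH[OF z(5) _ _ _ _ z(3) z(4) z(2)]) (use z in auto)
    then show ?thesis using py by simp
  qed
qed

lemma connV2:
  assumes y: "y \<in> VK - {v}"
  shows "connected_on (VG - {Inr y}) EG gG"
proof (rule hub_connected)
  fix p assume p: "p \<in> VG - {Inr y}"
  show "(p, Inl h0) \<in> (adj_rel (VG - {Inr y}) EG gG)\<^sup>*"
  proof (rule VG_cases[of p])
    show "p \<in> VG" using p by simp
  next
    fix x assume px: "p = Inl x" "x \<in> VH - {u}"
    have "(Inl x, Inl h0) \<in> (adj_rel (VG - {Inr y}) EG gG)\<^sup>*" by (rule reachInl) (use px in auto)
    then show ?thesis using px by simp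
  next
    fix w assume pw: "p = Inr w" "w \<in> VK - {v}"
    then have wy: "w \<noteq> y" using p by auto
    have "(w, v) \<in> (adj_rel (VK - {y}) EK gK)\<^sup>*" using K2 y v pw wy unfolding two_connected_def connected_on_def by auto
    from first_hit[OF this] pw wy obtain z f where
      z: "z \<in> VK - {y}" "z \<noteq> v" "f \<in> EK" "gK f = (z,v) \<or> gK f = (v,z)" "(w,z) \<in> (adj_rel (VK - {y} - {v}) EK gK)\<^sup>*"
      by auto
    have "(Inr w, Inl h0) \<in> (adj_rel (VG - {Inr y}) EG gG)\<^sup>*"
      by (rule escK[OF z(5) _ _ _ _ z(3) z(4) z(2)]) (use z in auto)
    then show ?thesis using pw by simp
  qed
qed

lemma connE1:
  assumes e0: "e0 \<in> EH"
  shows "connected_on VG (EG - {Inl e0}) gG"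
proof (rule hub_connected)
  fix p assume p: "p \<in> VG"
  show "(p, Inr r0) \<in> (adj_rel VG (EG - {Inl e0}) gG)\<^sup>*"
  proof (rule VG_cases[of p])
    show "p \<in> VG" using p by simp
  next
    fix y assume py: "p = Inr y" "y \<in> VK - {v}"
    have "(Inr y, Inr r0) \<in> (adj_rel VG (EG - {Inl e0}) gG)\<^sup>*" by (rule reachInr) (use py in auto)
    then show ?thesis using py by simp
  next
    fix y assume py: "p = Inl y" "y \<in> VH - {u}"
    have "(y, u) \<in> (adj_rel VH (EH - {e0}) gH)\<^sup>*" using H2 e0 u py unfolding two_connected_def connected_on_def by auto
    from first_hit[OF this] py obtain z e where
      z: "z \<in> VH" "z \<noteq> u" "e \<in> EH - {e0}" "gH e = (z,u) \<or> gH e = (u,z)" "(y,z) \<in> (adj_rel (VH - {u}) (EH - {e0}) gH)\<^sup>*"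
      by auto
    have "(Inl y, Inr r0) \<in> (adj_rel VG (EG - {Inl e0}) gG)\<^sup>*"
      by (rule escH[OF z(5) _ _ _ _ _ z(4) z(2)]) (use z in auto)
    then show ?thesis using py by simp
  qed
qed

lemma connE2:
  assumes f0: "f0 \<in> EK"
  shows "connected_on VG (EG - {Inr f0}) gG"
proof (rule hub_connected)
  fix p assume p: "p \<in> VG"
  show "(p, Inl h0) \<in> (adj_rel VG (EG - {Inr f0}) gG)\<^sup>*"
  proof (rule VG_cases[of p])
    show "p \<in> VG" using p by simp
  next
    fix x assume px: "p = Inl x" "x \<in> VH - {u}"
    have "(Inl x, Inl h0) \<in> (adj_rel VG (EG - {Inr f0}) gG)\<^sup>*" by (rule reachInl) (use px in auto)
    then show ?thesis using px by simp
  next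
    fix w assume pw: "p = Inr w" "w \<in> VK - {v}"
    have "(w, v) \<in> (adj_rel VK (EK - {f0}) gK)\<^sup>*" using K2 f0 v pw unfolding two_connected_def connected_on_def by auto
    from first_hit[OF this] pw obtain z f where
      z: "z \<in> VK" "z \<noteq> v" "f \<in> EK - {f0}" "gK f = (z,v) \<or> gK f = (v,z)" "(w,z) \<in> (adj_rel (VK - {v}) (EK - {f0}) gK)\<^sup>*"
      by auto
    have "(Inr w, Inl h0) \<in> (adj_rel VG (EG - {Inr f0}) gG)\<^sup>*"
      by (rule escK[OF z(5) _ _ _ _ _ z(4) z(2)]) (use z in auto)
    then show ?thesis using pw by simp
  qed
qed

lemma EH_ne: "\<exists>e. e \<in> EH"
proof (rule ccontr)
  assume "\<not> (\<exists>e. e \<in> EH)" then have "EH = {}" by auto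
  then have "deg VH EH gH u = 0" unfolding deg_def by simp
  then show False using Hcub u unfolding cubic_def by auto
qed

lemma twoG: "two_connected VG EG gG"
  unfolding two_connected_def
proof (intro conjI ballI)
  show "wf_graph VG EG gG" by (rule wfG)
  have "{Inl h0, Inr r0} \<subseteq> VG" using h0 r0 Uv by auto
  then have "card {Inl h0, Inr r0} \<le> card VG" using finG by (intro card_mono) auto
  then show "2 \<le> card VG" by simp
  obtain e where e: "e \<in> EH" using EH_ne by blast
  show "connected_on VG EG gG" by (rule connected_mono[OF connE1[OF e]]) auto
next
  fix w assume "w \<in> VG"
  then show "connected_on (VG - {w}) EG gG" using connV1 connV2 by (cases w) auto
next
  fix e assume e: "e \<in> EG"
  then show "connected_on VG (EG - {e}) gG" using connE1 connE2 by (cases e) auto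
qed

end



lemma iso_mult:
  assumes "inj_on \<psi> V1" "fst (g1 f) \<in> V1" "snd (g1 f) \<in> V1" "Y \<in> V1"
    "g2 e = map_prod \<psi> \<psi> (g1 f) \<or> g2 e = prod.swap (map_prod \<psi> \<psi> (g1 f))"
  shows "mult g2 e (\<psi> Y) = mult g1 f Y"
proof -
  have a: "\<psi> (fst (g1 f)) = \<psi> Y \<longleftrightarrow> fst (g1 f) = Y" using assms(1-4) by (meson inj_on_eq_iff)
  have b: "\<psi> (snd (g1 f)) = \<psi> Y \<longleftrightarrow> snd (g1 f) = Y" using assms(1-4) by (meson inj_on_eq_iff)
  show ?thesis using assms(5) a b by (cases "g1 f") (auto simp: mult_def)
qed

lemma iso_cubic:
  assumes rho: "bij_betw \<rho> E2 E1" and inj: "inj_on \<psi> V1" and im: "\<psi> ` V1 = V2"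
    and ends: "\<And>e. e \<in> E2 \<Longrightarrow> g2 e = map_prod \<psi> \<psi> (g1 (\<rho> e)) \<or> g2 e = prod.swap (map_prod \<psi> \<psi> (g1 (\<rho> e)))"
    and cub: "cubic V1 E1 g1"
  shows "cubic V2 E2 g2"
proof -
  have fin1: "finite V1" "finite E1" and wf1: "\<And>f. f \<in> E1 \<Longrightarrow> fst (g1 f) \<in> V1 \<and> snd (g1 f) \<in> V1"
    using cub unfolding cubic_def wf_graph_def by auto
  have fin2: "finite E2" using bij_betw_finite[OF rho] fin1 by simp
  have rE: "\<And>e. e \<in> E2 \<Longrightarrow> \<rho> e \<in> E1" using rho unfolding bij_betw_def by auto
  have "wf_graph V2 E2 g2" unfolding wf_graph_def
  proof (intro conjI ballI)
    show "finite V2" using im fin1 by auto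
    show "finite E2" by (rule fin2)
  next
    fix e assume e: "e \<in> E2"
    then have "fst (g1 (\<rho> e)) \<in> V1" "snd (g1 (\<rho> e)) \<in> V1" using wf1 rE by auto
    then show "fst (g2 e) \<in> V2" "snd (g2 e) \<in> V2" using ends[OF e] im by (cases "g1 (\<rho> e)"; auto)+
  qed
  moreover have "deg V2 E2 g2 X = 3" if X: "X \<in> V2" for X
  proof -
    obtain Y where Y: "Y \<in> V1" "X = \<psi> Y" using X im by auto
    have "deg V2 E2 g2 X = (\<Sum>e\<in>E2. mult g2 e (\<psi> Y))" using Y deg_sum[OF fin2] by simp
    also have "\<dots> = (\<Sum>e\<in>E2. mult g1 (\<rho> e) Y)"
    proof (rule sum.cong)
      fix e assume e: "e \<in> E2"
      show "mult g2 e (\<psi> Y) = mult g1 (\<rho> e) Y"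
        using iso_mult[of \<psi> V1 g1 "\<rho> e" Y g2 e] inj Y(1) ends[OF e] wf1[OF rE[OF e]] by blast
    qed simp
    also have "\<dots> = (\<Sum>f\<in>E1. mult g1 f Y)" by (rule sum.reindex_bij_betw[OF rho])
    also have "\<dots> = deg V1 E1 g1 Y" by (simp add: deg_sum[OF fin1(2)])
    also have "\<dots> = 3" using cub Y unfolding cubic_def by auto
    finally show ?thesis .
  qed
  ultimately show ?thesis unfolding cubic_def by auto
qed

lemma iso_bip:
  assumes rho: "bij_betw \<rho> E2 E1" and inj: "inj_on \<psi> V1" and im: "\<psi> ` V1 = V2"
    and ends: "\<And>e. e \<in> E2 \<Longrightarrow> g2 e = map_prod \<psi> \<psi> (g1 (\<rho> e)) \<or> g2 e = prod.swap (map_prod \<psi> \<psi> (g1 (\<rho> e)))"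
    and bip: "bipartite_with V1 E1 g1 A B"
  shows "bipartite_with V2 E2 g2 (\<psi> ` A) (\<psi> ` B)"
proof -
  have AB: "A \<union> B = V1" "A \<inter> B = {}" using bip unfolding bipartite_with_def by auto
  have rE: "\<And>e. e \<in> E2 \<Longrightarrow> \<rho> e \<in> E1" using rho unfolding bij_betw_def by auto
  have "\<psi> ` A \<union> \<psi> ` B = V2" using AB im by auto
  moreover have "\<psi> ` A \<inter> \<psi> ` B = {}"
  proof -
    have "\<psi> ` A \<inter> \<psi> ` B = \<psi> ` (A \<inter> B)" using inj AB(1) by (intro inj_on_image_Int[symmetric]) auto
    then show ?thesis using AB by simp
  qed
  moreover have "(fst (g2 e) \<in> \<psi> ` A \<and> snd (g2 e) \<in> \<psi> ` B) \<or> (fst (g2 e) \<in> \<psi> ` B \<and> snd (g2 e) \<in> \<psi> ` A)" if e: "e \<in> E2" for e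
  proof -
    have "(fst (g1 (\<rho> e)) \<in> A \<and> snd (g1 (\<rho> e)) \<in> B) \<or> (fst (g1 (\<rho> e)) \<in> B \<and> snd (g1 (\<rho> e)) \<in> A)"
      using bip rE[OF e] unfolding bipartite_with_def by auto
    then show ?thesis using ends[OF e] by (cases "g1 (\<rho> e)") auto
  qed
  ultimately show ?thesis unfolding bipartite_with_def by auto
qed

context S3 begin

abbreviation "WG \<equiv> VG - Inr ` U"
abbreviation "C0 \<equiv> (Inl ` (VH - {u}) :: ('a + 'b) set)"
abbreviation "RK \<equiv> adj_rel (VK - U) EK gK"

lemma adjK_nov: "(p,q) \<in> RK \<Longrightarrow> p \<noteq> v \<and> q \<noteq> v"
proof -
  have *: "(v,q) \<notin> RK" for q
  proof
    assume a: "(v,q) \<in> RK"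
    then obtain f where f: "f \<in> EK" "gK f = (v,q) \<or> gK f = (q,v)" "q \<in> VK - U" unfolding adj_rel_def by auto
    have "q \<in> component (VK - U) EK gK v" unfolding component_def using a f by auto
    then have "q = v" using compv by auto
    then show False using f Knl by auto
  qed
  assume "(p,q) \<in> RK"
  then show ?thesis using *[of q] *[of p] adj_sym[of p q] by auto
qed

lemma RK_eq: "RK = adj_rel (VK - U - {v}) EK gK"
proof
  show "RK \<subseteq> adj_rel (VK - U - {v}) EK gK"
  proof
    fix pq assume a: "pq \<in> RK"
    obtain p q where pq: "pq = (p,q)" by (cases pq)
    then have "p \<noteq> v" "q \<noteq> v" using adjK_nov a by auto
    then show "pq \<in> adj_rel (VK - U - {v}) EK gK" using a pq unfolding adj_rel_def by auto
  qed
next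
  show "adj_rel (VK - U - {v}) EK gK \<subseteq> RK" by (rule adj_mono) auto
qed

lemma adjG_class:
  assumes "(p,q) \<in> adj_rel WG EG gG"
  shows "(\<exists>a b. p = Inl a \<and> q = Inl b) \<or> (\<exists>a b. p = Inr a \<and> q = Inr b \<and> (a,b) \<in> RK)"
proof -
  from assms obtain x where x: "x \<in> EG" "gG x = (p,q) \<or> gG x = (q,p)" "p \<in> WG" "q \<in> WG"
    unfolding adj_rel_def by auto
  show ?thesis
  proof (cases x)
    case (Inl e)
    then have e: "e \<in> EH" using x by simp
    show ?thesis
    proof (cases "incident gH e u")
      case True
      have s: "sigma e \<in> EK" "incident gK (sigma e) v" using sig[OF e True] by auto
      have "oK (sigma e) \<in> U" using incKU[OF s] .
      then have False using x Inl gG_cut[OF True] by auto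
      then show ?thesis ..
    next
      case False
      then show ?thesis using x Inl gG_nin[OF False] by (cases "gH e") auto
    qed
  next
    case (Inr f)
    then have f: "f \<in> EK" using x by simp
    obtain a b where ab: "gK f = (a,b)" by (cases "gK f")
    have "p = Inr a \<and> q = Inr b \<or> p = Inr b \<and> q = Inr a" using x Inr gG_Inr[of f] ab by auto
    moreover have "a \<in> VK" "b \<in> VK" using wfK[OF f] ab by auto
    ultimately show ?thesis using x f ab unfolding adj_rel_def by auto
  qed
qed

lemma reach_Inl: "(Inl a, q) \<in> (adj_rel WG EG gG)\<^sup>* \<Longrightarrow> \<exists>b. q = Inl b"
proof (induction q rule: rtrancl_induct)
  case base then show ?case by simp
next
  case (step q r)
  then show ?case using adjG_class[OF step.hyps(2)] by auto
qed

lemma reach_Inr: "(Inr a, q) \<in> (adj_rel WG EG gG)\<^sup>* \<Longrightarrow> \<exists>b. q = Inr b \<and> (a,b) \<in> RK\<^sup>*"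
proof (induction q rule: rtrancl_induct)
  case base then show ?case by simp
next
  case (step q r)
  from step.IH obtain b where b: "q = Inr b" "(a,b) \<in> RK\<^sup>*" by blast
  from adjG_class[OF step.hyps(2)] b obtain c where c: "r = Inr c" "(b,c) \<in> RK" by auto
  from rtrancl_into_rtrancl[OF b(2) c(2)] c(1) show ?case by blast
qed

lemma compG_Inl: "a \<in> VH - {u} \<Longrightarrow> component WG EG gG (Inl a) = C0"
proof
  assume a: "a \<in> VH - {u}"
  show "component WG EG gG (Inl a) \<subseteq> C0"
  proof
    fix q :: "'a + 'b" assume q: "q \<in> component WG EG gG (Inl a)"
    then obtain b where "q = Inl b" using reach_Inl unfolding component_def by blast
    then show "q \<in> C0" using q unfolding component_def by auto
  qed
  show "C0 \<subseteq> component WG EG gG (Inl a)"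
  proof
    fix q :: "'a + 'b" assume "q \<in> C0"
    then obtain b where b: "q = Inl b" "b \<in> VH - {u}" by auto
    have "(a,b) \<in> (adj_rel (VH - {u}) EH gH)\<^sup>*" using Hu_conn a b unfolding connected_on_def by auto
    then have "(Inl a, Inl b) \<in> (adj_rel WG EG gG)\<^sup>*" by (rule trH) auto
    then show "q \<in> component WG EG gG (Inl a)" unfolding component_def using b by auto
  qed
qed

lemma compG_Inr: "a \<in> VK - U - {v} \<Longrightarrow> component WG EG gG (Inr a) = Inr ` component (VK - U) EK gK a"
proof
  assume a: "a \<in> VK - U - {v}"
  show "component WG EG gG (Inr a) \<subseteq> Inr ` component (VK - U) EK gK a"
  proof
    fix q :: "'a + 'b" assume q: "q \<in> component WG EG gG (Inr a)"
    then obtain b where b: "q = Inr b" "(a,b) \<in> RK\<^sup>*" using reach_Inr unfolding component_def by blast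
    have "b \<in> VK - U" using rt_in[OF b(2)] a by auto
    then show "q \<in> Inr ` component (VK - U) EK gK a" using b unfolding component_def by auto
  qed
  show "Inr ` component (VK - U) EK gK a \<subseteq> component WG EG gG (Inr a)"
  proof
    fix q :: "'a + 'b" assume "q \<in> Inr ` component (VK - U) EK gK a"
    then obtain b where b: "q = Inr b" "(a,b) \<in> RK\<^sup>*" unfolding component_def by auto
    then have "(a,b) \<in> (adj_rel (VK - U - {v}) EK gK)\<^sup>*" using RK_eq by simp
    then have "(Inr a, Inr b) \<in> (adj_rel WG EG gG)\<^sup>*" by (rule trK) (use vU in auto)
    moreover have "b \<in> VK - U - {v}" using rt_in[OF \<open>(a,b) \<in> (adj_rel (VK - U - {v}) EK gK)\<^sup>*\<close>] a by auto
    ultimately show "q \<in> component WG EG gG (Inr a)" unfolding component_def using b by auto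
  qed
qed

lemma compK_ne_v: "a \<in> VK - U \<Longrightarrow> a \<noteq> v \<Longrightarrow> component (VK - U) EK gK a \<noteq> {v}"
  using component_self[of a "VK - U" EK gK] by auto

lemma componentsG: "components WG EG gG = insert C0 ((\<lambda>C. Inr ` C) ` (Cs - {{v}}))"
proof
  show "components WG EG gG \<subseteq> insert C0 ((\<lambda>C. Inr ` C) ` (Cs - {{v}}))"
  proof
    fix X assume "X \<in> components WG EG gG"
    then obtain p where p: "p \<in> WG" "X = component WG EG gG p" unfolding components_def by auto
    show "X \<in> insert C0 ((\<lambda>C. Inr ` C) ` (Cs - {{v}}))"
    proof (cases p)
      case (Inl a)
      then show ?thesis using p compG_Inl by auto
    next
      case (Inr a)
      then have a: "a \<in> VK - U - {v}" using p by auto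
      then have "component (VK - U) EK gK a \<in> Cs - {{v}}" using compK_ne_v unfolding components_def by auto
      then show ?thesis using p Inr compG_Inr[OF a] by auto
    qed
  qed
  show "insert C0 ((\<lambda>C. Inr ` C) ` (Cs - {{v}})) \<subseteq> components WG EG gG"
  proof
    fix X assume X: "X \<in> insert C0 ((\<lambda>C. Inr ` C) ` (Cs - {{v}}))"
    show "X \<in> components WG EG gG"
    proof (cases "X = C0")
      case True
      have "Inl h0 \<in> WG" using h0 by auto
      have "C0 = component WG EG gG (Inl h0)" using compG_Inl[OF h0] by simp
      then show ?thesis using True \<open>Inl h0 \<in> WG\<close> unfolding components_def by (intro image_eqI) auto
    next
      case False
      then obtain C where C: "C \<in> Cs" "C \<noteq> {v}" "X = Inr ` C" using X by auto
      then obtain a where a: "a \<in> VK - U" "C = component (VK - U) EK gK a" unfolding components_def by auto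
      have "a \<noteq> v" using a C compv by auto
      then have "Inr a \<in> WG" using a by auto
      moreover have "X = component WG EG gG (Inr a)" using compG_Inr[of a] a C \<open>a \<noteq> v\<close> by auto
      ultimately show ?thesis unfolding components_def by auto
    qed
  qed
qed


abbreviation "ccK \<equiv> contr_class VK EK gK U"
abbreviation "ccG \<equiv> contr_class VG EG gG (Inr ` U)"
abbreviation "V1 \<equiv> (\<lambda>x. {x}) ` U \<union> Cs"
abbreviation "E1 \<equiv> contr_edges VK EK gK U"
abbreviation "g1 \<equiv> contr_ends VK EK gK U"
abbreviation "V2 \<equiv> (\<lambda>x. {x}) ` (Inr ` U) \<union> components WG EG gG"
abbreviation "E2 \<equiv> contr_edges VG EG gG (Inr ` U)"
abbreviation "g2 \<equiv> contr_ends VG EG gG (Inr ` U)"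

definition psi :: "'b set \<Rightarrow> ('a + 'b) set" where
  "psi X = (if X = {v} then C0 else Inr ` X)"

definition rho :: "'e + 'f \<Rightarrow> 'f" where
  "rho x = (case x of Inl e \<Rightarrow> sigma e | Inr f \<Rightarrow> f)"

lemma ccK_v: "ccK v = {v}" unfolding contr_class_def using vU compv by simp
lemma ccK_U: "y \<in> U \<Longrightarrow> ccK y = {y}" unfolding contr_class_def by simp
lemma ccK_mem: "y \<in> VK \<Longrightarrow> y \<in> ccK y" unfolding contr_class_def using component_self[of y "VK - U" EK gK] by auto
lemma ccK_ne: "y \<in> VK - {v} \<Longrightarrow> ccK y \<noteq> {v}" using ccK_mem[of y] by auto

lemma ccG_Inl: "a \<in> VH - {u} \<Longrightarrow> ccG (Inl a) = C0"
proof -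
  assume a: "a \<in> VH - {u}"
  have "(Inl a :: 'a + 'b) \<notin> Inr ` U" by auto
  then show ?thesis unfolding contr_class_def using compG_Inl[OF a] by simp
qed

lemma ccG_Inr: "y \<in> VK - {v} \<Longrightarrow> ccG (Inr y) = Inr ` ccK y"
proof (cases "y \<in> U")
  case True
  then show ?thesis unfolding contr_class_def by simp
next
  case False
  assume y: "y \<in> VK - {v}"
  then have "(Inr y :: 'a + 'b) \<notin> Inr ` U" using False by auto
  then show ?thesis unfolding contr_class_def using compG_Inr[of y] y False by simp
qed

lemma C0_ne_Inr: "C0 \<noteq> Inr ` X"
proof
  assume "C0 = Inr ` X"
  moreover have "Inl h0 \<in> C0" using h0 by auto
  ultimately show False by auto
qed

lemma psi_ne: "X \<noteq> {v} \<Longrightarrow> psi X = Inr ` X" unfolding psi_def by simp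

lemma E2_Inl: "Inl e \<in> E2 \<longleftrightarrow> e \<in> EH \<and> incident gH e u"
proof (cases "e \<in> EH")
  case True
  show ?thesis
  proof (cases "incident gH e u")
    case inc: True
    have s: "sigma e \<in> EK" "incident gK (sigma e) v" using sig[OF True inc] by auto
    have k: "oK (sigma e) \<in> VK - {v}" using incK[OF s] by auto
    have h: "oH e \<in> VH - {u}" using incH[OF True inc] by auto
    have "ccG (fst (gG (Inl e))) \<noteq> ccG (snd (gG (Inl e)))"
      using gG_cut[OF inc] ccG_Inl[OF h] ccG_Inr[OF k] C0_ne_Inr by simp
    then show ?thesis unfolding contr_edges_def using True inc by simp
  next
    case ninc: False
    have n: "fst (gH e) \<in> VH - {u}" "snd (gH e) \<in> VH - {u}" using nincH[OF True ninc] by auto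
    have "ccG (fst (gG (Inl e))) = ccG (snd (gG (Inl e)))"
      using gG_nin[OF ninc] ccG_Inl[OF n(1)] ccG_Inl[OF n(2)] by (cases "gH e") simp
    then show ?thesis unfolding contr_edges_def using ninc by simp
  qed
next
  case False
  then show ?thesis unfolding contr_edges_def by simp
qed

lemma E2_Inr: "Inr f \<in> E2 \<longleftrightarrow> f \<in> EK \<and> \<not> incident gK f v \<and> f \<in> E1"
proof (cases "f \<in> EK \<and> \<not> incident gK f v")
  case True
  then have n: "fst (gK f) \<in> VK - {v}" "snd (gK f) \<in> VK - {v}" using nincK by auto
  have "ccG (fst (gG (Inr f))) = Inr ` ccK (fst (gK f))" "ccG (snd (gG (Inr f))) = Inr ` ccK (snd (gK f))"
    using gG_Inr[of f] ccG_Inr[OF n(1)] ccG_Inr[OF n(2)] by (cases "gK f"; simp)+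
  then show ?thesis unfolding contr_edges_def using True by (auto simp: inj_image_eq_iff)
next
  case False
  then show ?thesis unfolding contr_edges_def by auto
qed

lemma E1_incv: "f \<in> EK \<Longrightarrow> incident gK f v \<Longrightarrow> f \<in> E1"
proof -
  assume f: "f \<in> EK" "incident gK f v"
  have o: "oK f \<in> U" "gK f = (v, oK f) \<or> gK f = (oK f, v)" using incKU[OF f] incK[OF f] by auto
  have "oK f \<noteq> v" using o vU by auto
  then have "ccK (fst (gK f)) \<noteq> ccK (snd (gK f))" using o ccK_v ccK_U[OF o(1)] by auto
  then show ?thesis unfolding contr_edges_def using f by simp
qed

lemma rho_bij: "bij_betw rho E2 E1"
  unfolding bij_betw_def
proof
  show "inj_on rho E2"
  proof (rule inj_onI)
    fix x y assume x: "x \<in> E2" and y: "y \<in> E2" and xy: "rho x = rho y"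
    show "x = y"
    proof (cases x; cases y)
      fix e1 e2 assume a: "x = Inl e1" "y = Inl e2"
      then have "e1 \<in> {e\<in>EH. incident gH e u}" "e2 \<in> {e\<in>EH. incident gH e u}" using x y E2_Inl by auto
      moreover have "sigma e1 = sigma e2" using xy a unfolding rho_def by simp
      ultimately show "x = y" using sigma a unfolding bij_betw_def inj_on_def by blast
    next
      fix e1 f2 assume a: "x = Inl e1" "y = Inr f2"
      then have "e1 \<in> EH" "incident gH e1 u" "\<not> incident gK f2 v" using x y E2_Inl E2_Inr by auto
      moreover have "sigma e1 = f2" using xy a unfolding rho_def by simp
      ultimately show "x = y" using sig by auto
    next
      fix f1 e2 assume a: "x = Inr f1" "y = Inl e2"
      then have "e2 \<in> EH" "incident gH e2 u" "\<not> incident gK f1 v" using x y E2_Inl E2_Inr by auto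
      moreover have "sigma e2 = f1" using xy a unfolding rho_def by simp
      ultimately show "x = y" using sig by auto
    next
      fix f1 f2 assume a: "x = Inr f1" "y = Inr f2"
      then show "x = y" using xy unfolding rho_def by simp
    qed
  qed
  show "rho ` E2 = E1"
  proof
    show "rho ` E2 \<subseteq> E1"
    proof
      fix f assume "f \<in> rho ` E2"
      then obtain x where x: "x \<in> E2" "f = rho x" by auto
      show "f \<in> E1"
      proof (cases x)
        case (Inl e)
        then have "e \<in> EH" "incident gH e u" using x E2_Inl by auto
        then show ?thesis using x Inl sig E1_incv unfolding rho_def by auto
      next
        case (Inr f')
        then show ?thesis using x E2_Inr unfolding rho_def by auto
      qed
    qed
    show "E1 \<subseteq> rho ` E2"
    proof
      fix f assume f: "f \<in> E1"
      then have fE: "f \<in> EK" unfolding contr_edges_def by auto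
      show "f \<in> rho ` E2"
      proof (cases "incident gK f v")
        case True
        then obtain e where e: "e \<in> EH" "incident gH e u" "sigma e = f" using sig_inv fE by blast
        then have "Inl e \<in> E2" using E2_Inl by auto
        then show ?thesis using e unfolding rho_def by (intro image_eqI[of _ _ "Inl e"]) auto
      next
        case False
        then have "Inr f \<in> E2" using E2_Inr f fE by auto
        then show ?thesis unfolding rho_def by (intro image_eqI[of _ _ "Inr f"]) auto
      qed
    qed
  qed
qed

lemma psi_inj: "inj_on psi V1"
proof (rule inj_onI)
  fix X Y assume X: "X \<in> V1" and Y: "Y \<in> V1" and e: "psi X = psi Y"
  show "X = Y"
  proof (cases "X = {v}"; cases "Y = {v}")
    assume "X = {v}" "Y = {v}" then show ?thesis by simp
  next
    assume "X = {v}" "Y \<noteq> {v}"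
    then have "C0 = Inr ` Y" using e unfolding psi_def by simp
    then show ?thesis using C0_ne_Inr by blast
  next
    assume "X \<noteq> {v}" "Y = {v}"
    then have "C0 = Inr ` X" using e unfolding psi_def by simp
    then show ?thesis using C0_ne_Inr by blast
  next
    assume "X \<noteq> {v}" "Y \<noteq> {v}"
    then have "(Inr ` X :: ('a + 'b) set) = Inr ` Y" using e unfolding psi_def by simp
    then show ?thesis by (simp add: inj_image_eq_iff)
  qed
qed

lemma psi_U: "psi ` ((\<lambda>x. {x}) ` U) = (\<lambda>x. {x}) ` (Inr ` U)"
proof -
  have "psi {x} = {Inr x}" if "x \<in> U" for x using that vU unfolding psi_def by auto
  then show ?thesis by (force simp: image_image)
qed

lemma psi_Cs: "psi ` Cs = components WG EG gG"
proof -
  have "Cs = insert {v} (Cs - {{v}})" using vcomp' by auto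
  then have "psi ` Cs = insert (psi {v}) (psi ` (Cs - {{v}}))" by (metis image_insert)
  also have "psi ` (Cs - {{v}}) = (\<lambda>C. Inr ` C) ` (Cs - {{v}})" unfolding psi_def by (intro image_cong) auto
  also have "psi {v} = C0" unfolding psi_def by simp
  finally show ?thesis using componentsG by simp
qed

lemma psi_im: "psi ` V1 = V2" using psi_U psi_Cs by (simp add: image_Un)

lemma ends_iso: "x \<in> E2 \<Longrightarrow> g2 x = map_prod psi psi (g1 (rho x)) \<or> g2 x = prod.swap (map_prod psi psi (g1 (rho x)))"
proof (cases x)
  case (Inl e)
  assume "x \<in> E2"
  then have e: "e \<in> EH" "incident gH e u" using Inl E2_Inl by auto
  have s: "sigma e \<in> EK" "incident gK (sigma e) v" using sig[OF e] by auto
  have k: "oK (sigma e) \<in> VK - {v}" "gK (sigma e) = (v, oK (sigma e)) \<or> gK (sigma e) = (oK (sigma e), v)" using incK[OF s] by auto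
  have h: "oH e \<in> VH - {u}" using incH[OF e] by auto
  have g2x: "g2 x = (C0, Inr ` ccK (oK (sigma e)))"
    unfolding contr_ends_def using Inl gG_cut[OF e(2)] ccG_Inl[OF h] ccG_Inr[OF k(1)] by simp
  have p1: "psi (ccK v) = C0" using ccK_v unfolding psi_def by simp
  have p2: "psi (ccK (oK (sigma e))) = Inr ` ccK (oK (sigma e))" using psi_ne ccK_ne[OF k(1)] by simp
  show ?thesis using k(2) g2x p1 p2 Inl unfolding contr_ends_def rho_def by auto
next
  case (Inr f)
  assume "x \<in> E2"
  then have f: "f \<in> EK" "\<not> incident gK f v" using Inr E2_Inr by auto
  obtain a b where ab: "gK f = (a,b)" by (cases "gK f")
  have n: "a \<in> VK - {v}" "b \<in> VK - {v}" using nincK[OF f] ab by auto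
  have "g2 x = (Inr ` ccK a, Inr ` ccK b)"
    unfolding contr_ends_def using Inr gG_Inr[of f] ab ccG_Inr[OF n(1)] ccG_Inr[OF n(2)] by simp
  moreover have "psi (ccK a) = Inr ` ccK a" "psi (ccK b) = Inr ` ccK b" using psi_ne ccK_ne n by auto
  ultimately show ?thesis using Inr ab unfolding contr_ends_def rho_def by simp
qed

lemma bipG: "bipartising_set VG EG gG (Inr ` U)"
  unfolding bipartising_set_def
proof (intro conjI ballI)
  show "Inr ` U \<subseteq> VG" using Uv by auto
  have "card (Inr ` U :: ('a + 'b) set) = card U" by (rule card_image) simp
  then show "2 \<le> card (Inr ` U :: ('a + 'b) set)" using cardU by simp
next
  fix x assume x: "x \<in> EG"
  show "\<not> (fst (gG x) \<in> Inr ` U \<and> snd (gG x) \<in> Inr ` U)"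
  proof (cases x)
    case (Inl e)
    then show ?thesis
    proof (cases "incident gH e u")
      case True then show ?thesis using Inl gG_cut[OF True] by auto
    next
      case False then show ?thesis using Inl gG_nin[OF False] by (cases "gH e") auto
    qed
  next
    case (Inr f)
    then have "f \<in> EK" using x by simp
    then have "\<not> (fst (gK f) \<in> U \<and> snd (gK f) \<in> U)" using KU unfolding bipartising_set_def by auto
    then show ?thesis using Inr gG_Inr[of f] by (cases "gK f") auto
  qed
next
  have cub1: "cubic V1 E1 g1" using KU unfolding bipartising_set_def by auto
  show "cubic V2 E2 g2" by (rule iso_cubic[OF rho_bij psi_inj psi_im ends_iso cub1])
  have bip1: "bipartite_with V1 E1 g1 ((\<lambda>x. {x}) ` U) Cs" using KU unfolding bipartising_set_def by auto
  have "bipartite_with V2 E2 g2 (psi ` ((\<lambda>x. {x}) ` U)) (psi ` Cs)"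
    by (rule iso_bip[OF rho_bij psi_inj psi_im ends_iso bip1])
  then show "bipartite_with V2 E2 g2 ((\<lambda>x. {x}) ` (Inr ` U)) (components WG EG gG)"
    using psi_U psi_Cs by simp
qed

end



lemma nin_split: "nin g f C = (if nin g f C = 1 then 1 else 0) + 2 * (if nin g f C = 2 then 1 else 0)"
  unfolding nin_def by auto

lemma nin_parity: "finite N \<Longrightarrow> even (\<Sum>f\<in>N. nin g f C) \<longleftrightarrow> even (card {f\<in>N. nin g f C = 1})"
proof -
  assume fin: "finite N"
  have "(\<Sum>f\<in>N. nin g f C) = (\<Sum>f\<in>N. (if nin g f C = 1 then 1 else 0) + 2 * (if nin g f C = 2 then 1 else 0))"
    by (rule sum.cong) (rule refl, rule nin_split)
  also have "\<dots> = card {f\<in>N. nin g f C = 1} + 2 * (\<Sum>f\<in>N. (if nin g f C = 2 then 1 else 0))"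
    by (simp add: sum.distrib sum_distrib_left card_filter_sum[OF fin])
  finally show ?thesis by simp
qed

lemma sum_odd: "finite S \<Longrightarrow> (\<forall>x\<in>S. odd (h x :: nat)) \<Longrightarrow> even (sum h S) \<longleftrightarrow> even (card S)"
proof (induction S rule: finite_induct)
  case empty then show ?case by simp
next
  case (insert x F)
  then show ?case by auto
qed

lemma sum_odd_ge: "finite S \<Longrightarrow> (\<forall>x\<in>S. odd (h x :: nat)) \<Longrightarrow> card S \<le> sum h S"
proof -
  assume "finite S" "\<forall>x\<in>S. odd (h x)"
  then have "(\<Sum>x\<in>S. (1::nat)) \<le> sum h S"
  proof (intro sum_mono)
    fix x assume "\<forall>x\<in>S. odd (h x)" "x \<in> S"
    then have "odd (h x)" by blast
    then have "0 < h x" using odd_pos by blast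
    then show "1 \<le> h x" by simp
  qed
  then show ?thesis by simp
qed

lemma bip_card:
  assumes bip: "bipartite_with V E g A B" and cub: "cubic V E g"
  shows "card A = card B"
proof -
  have fin: "finite V" "finite E" using cub unfolding cubic_def wf_graph_def by auto
  have AB: "A \<union> B = V" "A \<inter> B = {}" using bip unfolding bipartite_with_def by auto
  have finAB: "finite A" "finite B" using fin AB by (metis finite_Un)+
  have d: "deg V E g x = 3" if "x \<in> V" for x using cub that unfolding cubic_def by auto
  have nA: "nin g e A = 1" if "e \<in> E" for e using bip that AB(2) unfolding bipartite_with_def nin_def by auto
  have nB: "nin g e B = 1" if "e \<in> E" for e using bip that AB(2) unfolding bipartite_with_def nin_def by auto
  have "(\<Sum>x\<in>A. deg V E g x) = (\<Sum>x\<in>A. 3)" using d AB by (intro sum.cong) auto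
  then have "3 * card A = (\<Sum>x\<in>A. deg V E g x)" by simp
  also have "\<dots> = (\<Sum>x\<in>A. \<Sum>e\<in>E. mult g e x)" by (simp add: deg_sum[OF fin(2)])
  also have "\<dots> = (\<Sum>e\<in>E. nin g e A)" by (rule handshake[OF finAB(1) fin(2)])
  also have "\<dots> = card E" using nA by simp
  finally have 1: "3 * card A = card E" .
  have "(\<Sum>x\<in>B. deg V E g x) = (\<Sum>x\<in>B. 3)" using d AB by (intro sum.cong) auto
  then have "3 * card B = (\<Sum>x\<in>B. deg V E g x)" by simp
  also have "\<dots> = (\<Sum>x\<in>B. \<Sum>e\<in>E. mult g e x)" by (simp add: deg_sum[OF fin(2)])
  also have "\<dots> = (\<Sum>e\<in>E. nin g e B)" by (rule handshake[OF finAB(2) fin(2)])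
  also have "\<dots> = card E" using nB by simp
  finally have 2: "3 * card B = card E" .
  from 1 2 show ?thesis by simp
qed

context S3 begin

lemma multK: "f \<in> EK \<Longrightarrow> mult gK f x = (if incident gK f x then 1 else 0)"
  using Knl unfolding mult_def incident_def by auto

lemma cK_sum: "N \<subseteq> EK \<Longrightarrow> card {f\<in>N. incident gK f x} = (\<Sum>f\<in>N. mult gK f x)"
proof -
  assume N: "N \<subseteq> EK"
  then have fin: "finite N" using finK finite_subset by blast
  have "(\<Sum>f\<in>N. mult gK f x) = (\<Sum>f\<in>N. if incident gK f x then 1 else 0)"
    using N multK by (intro sum.cong) auto
  then show ?thesis using card_filter_sum[OF fin] by simp
qed

lemma Cs_fin: "finite Cs" unfolding components_def using finK by simp

lemma Cs_sub: "C \<in> Cs \<Longrightarrow> C \<subseteq> VK - U" by (rule components_sub)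

lemma C_fin: "C \<in> Cs \<Longrightarrow> finite C" using Cs_sub finK finite_subset by (metis Diff_subset order_trans)

lemma mem_Cs_iff: "C \<in> Cs \<Longrightarrow> y \<in> VK - U \<Longrightarrow> y \<in> C \<longleftrightarrow> C = component (VK - U) EK gK y"
  using components_mem[of C "VK - U" EK gK y] component_self[of y "VK - U" EK gK] by auto

lemma ccK_iff: "C \<in> Cs \<Longrightarrow> x \<in> VK \<Longrightarrow> ccK x = C \<longleftrightarrow> x \<in> C"
proof (cases "x \<in> U")
  case True
  assume C: "C \<in> Cs"
  then have "x \<notin> C" using Cs_sub True by auto
  moreover have "{x} \<noteq> C" using \<open>x \<notin> C\<close> by auto
  ultimately show ?thesis using True unfolding contr_class_def by simp
next
  case False
  assume "C \<in> Cs" "x \<in> VK"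
  then show ?thesis using False mem_Cs_iff[of C x] unfolding contr_class_def by auto
qed

lemma comp_odd: "C \<in> Cs \<Longrightarrow> odd (card C)"
proof -
  assume C: "C \<in> Cs"
  have cub1: "cubic V1 E1 g1" using KU unfolding bipartising_set_def by auto
  have E1sub: "E1 \<subseteq> EK" unfolding contr_edges_def by auto
  have finE1: "finite E1" using E1sub finK finite_subset by blast
  have m1: "mult g1 f C = nin gK f C" if "f \<in> EK" for f
    using ccK_iff[OF C] wfK[OF that] unfolding mult_def nin_def contr_ends_def by (cases "gK f") auto
  have n1: "nin gK f C = (if nin gK f C = 1 then 1 else 0)" if "f \<in> E1" for f
  proof -
    have f: "f \<in> EK" "ccK (fst (gK f)) \<noteq> ccK (snd (gK f))" using that unfolding contr_edges_def by auto
    have "\<not> (fst (gK f) \<in> C \<and> snd (gK f) \<in> C)" using f ccK_iff[OF C] wfK[OF f(1)] by auto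
    then show ?thesis unfolding nin_def by auto
  qed
  have n0: "(if nin gK f C = 1 then 1 else 0) = (0::nat)" if "f \<in> EK - E1" for f
  proof -
    have f: "f \<in> EK" "ccK (fst (gK f)) = ccK (snd (gK f))" using that unfolding contr_edges_def by auto
    have "fst (gK f) \<in> C \<longleftrightarrow> snd (gK f) \<in> C" using f ccK_iff[OF C] wfK[OF f(1)] by metis
    then show ?thesis unfolding nin_def by auto
  qed
  have "3 = deg V1 E1 g1 C" using cub1 C unfolding cubic_def by auto
  also have "\<dots> = (\<Sum>f\<in>E1. mult g1 f C)" by (rule deg_sum[OF finE1])
  also have "\<dots> = (\<Sum>f\<in>E1. if nin gK f C = 1 then 1 else 0)"
    using m1 n1 E1sub by (intro sum.cong) auto
  also have "\<dots> = (\<Sum>f\<in>EK. if nin gK f C = 1 then 1 else 0)"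
    by (rule sum.mono_neutral_left[OF finK(2) E1sub]) (use n0 in auto)
  also have "\<dots> = card {f\<in>EK. nin gK f C = 1}" using card_filter_sum[OF finK(2)] by simp
  finally have b3: "card {f\<in>EK. nin gK f C = 1} = 3" by simp
  have "(\<Sum>x\<in>C. deg VK EK gK x) = (\<Sum>x\<in>C. 3)" using Kcub Cs_sub[OF C] unfolding cubic_def by (intro sum.cong) auto
  then have "3 * card C = (\<Sum>x\<in>C. deg VK EK gK x)" by simp
  also have "\<dots> = (\<Sum>x\<in>C. \<Sum>f\<in>EK. mult gK f x)" by (simp add: deg_sum[OF finK(2)])
  also have "\<dots> = (\<Sum>f\<in>EK. nin gK f C)" by (rule handshake[OF C_fin[OF C] finK(2)])
  finally have "even (3 * card C) \<longleftrightarrow> even (card {f\<in>EK. nin gK f C = 1})" using nin_parity[OF finK(2)] by simp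
  then show ?thesis using b3 by simp
qed

lemma cardCs: "card Cs = card U"
proof -
  have bip1: "bipartite_with V1 E1 g1 ((\<lambda>x. {x}) ` U) Cs" and cub1: "cubic V1 E1 g1"
    using KU unfolding bipartising_set_def by auto
  have "card ((\<lambda>x. {x}) ` U) = card U" by (rule card_image) (simp add: inj_on_def)
  then show ?thesis using bip_card[OF bip1 cub1] by simp
qed

lemma sumU: "f \<in> EK \<Longrightarrow> (\<Sum>C\<in>Cs. if nin gK f C = 1 then 1 else 0) = nin gK f U"
proof -
  assume f: "f \<in> EK"
  obtain a b where ab: "gK f = (a,b)" by (cases "gK f")
  have abV: "a \<in> VK" "b \<in> VK" using wfK[OF f] ab by auto
  have nU: "\<not> (a \<in> U \<and> b \<in> U)" using KU f ab unfolding bipartising_set_def by force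
  have "(\<Sum>C\<in>Cs. if nin gK f C = 1 then 1 else 0) = card {C\<in>Cs. nin gK f C = 1}"
    using card_filter_sum[OF Cs_fin] by simp
  also have "\<dots> = nin gK f U"
  proof (cases "a \<in> U")
    case True
    then have b: "b \<in> VK - U" using nU abV by auto
    have "{C\<in>Cs. nin gK f C = 1} = {component (VK - U) EK gK b}"
    proof -
      have "nin gK f C = 1 \<longleftrightarrow> C = component (VK - U) EK gK b" if "C \<in> Cs" for C
        using that Cs_sub[OF that] True mem_Cs_iff[OF that b] ab unfolding nin_def by auto
      moreover have "component (VK - U) EK gK b \<in> Cs" using b unfolding components_def by auto
      ultimately show ?thesis by auto
    qed
    then show ?thesis using True b ab unfolding nin_def by simp
  next
    case aU: False
    show ?thesis
    proof (cases "b \<in> U")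
      case True
      then have a: "a \<in> VK - U" using aU abV by auto
      have "{C\<in>Cs. nin gK f C = 1} = {component (VK - U) EK gK a}"
      proof -
        have "nin gK f C = 1 \<longleftrightarrow> C = component (VK - U) EK gK a" if "C \<in> Cs" for C
          using that Cs_sub[OF that] True mem_Cs_iff[OF that a] ab unfolding nin_def by auto
        moreover have "component (VK - U) EK gK a \<in> Cs" using a unfolding components_def by auto
        ultimately show ?thesis by auto
      qed
      then show ?thesis using True a ab unfolding nin_def by simp
    next
      case False
      then have a: "a \<in> VK - U" and b: "b \<in> VK - U" using aU abV by auto
      have "(a,b) \<in> RK" using a b f ab unfolding adj_rel_def by auto
      then have "b \<in> component (VK - U) EK gK a" unfolding component_def using b by auto
      then have ceq: "component (VK - U) EK gK b = component (VK - U) EK gK a" by (rule component_eq)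
      have "{C\<in>Cs. nin gK f C = 1} = {}"
      proof -
        have "nin gK f C \<noteq> 1" if "C \<in> Cs" for C
          using mem_Cs_iff[OF that a] mem_Cs_iff[OF that b] ceq ab unfolding nin_def by auto
        then show ?thesis by auto
      qed
      moreover have "nin gK f U = 0" using aU False ab unfolding nin_def by simp
      ultimately show ?thesis by (metis card.empty)
    qed
  qed
  finally show ?thesis .
qed

lemma countK:
  assumes N: "N \<subseteq> EK" and one: "\<And>y. y \<in> VK - {v} \<Longrightarrow> card {f\<in>N. incident gK f y} = 1"
  shows "card {f\<in>N. incident gK f v} = 1"
proof -
  have finN: "finite N" using N finK finite_subset by blast
  define b where "b C = card {f\<in>N. nin gK f C = 1}" for C
  have finU: "finite U" using UK finK finite_subset by blast
  have "(\<Sum>x\<in>U. card {f\<in>N. incident gK f x}) = (\<Sum>x\<in>U. 1)" using one Uv by (intro sum.cong) auto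
  then have "card U = (\<Sum>x\<in>U. card {f\<in>N. incident gK f x})" by simp
  also have "\<dots> = (\<Sum>x\<in>U. \<Sum>f\<in>N. mult gK f x)" using cK_sum[OF N] by simp
  also have "\<dots> = (\<Sum>f\<in>N. nin gK f U)" by (rule handshake[OF finU finN])
  also have "\<dots> = (\<Sum>f\<in>N. \<Sum>C\<in>Cs. if nin gK f C = 1 then 1 else 0)"
    using sumU N by (intro sum.cong) auto
  also have "\<dots> = (\<Sum>C\<in>Cs. \<Sum>f\<in>N. if nin gK f C = 1 then 1 else 0)" by (rule sum.swap)
  also have "\<dots> = (\<Sum>C\<in>Cs. b C)" unfolding b_def using card_filter_sum[OF finN] by simp
  also have "\<dots> = b {v} + (\<Sum>C\<in>Cs - {{v}}. b C)" using sum.remove[OF Cs_fin vcomp'] by simp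
  finally have tot: "card U = b {v} + (\<Sum>C\<in>Cs - {{v}}. b C)" .
  have bv: "b {v} = card {f\<in>N. incident gK f v}"
  proof -
    have "nin gK f {v} = 1 \<longleftrightarrow> incident gK f v" if "f \<in> N" for f
    proof -
      have "fst (gK f) \<noteq> snd (gK f)" using Knl N that by auto
      then show ?thesis unfolding nin_def incident_def by auto
    qed
    then show ?thesis unfolding b_def by (metis (mono_tags, lifting) Collect_cong)
  qed
  have odd: "odd (b C)" if C: "C \<in> Cs - {{v}}" for C
  proof -
    have vC: "v \<notin> C" using C components_mem[of C "VK - U" EK gK v] compv by auto
    have "(\<Sum>f\<in>N. nin gK f C) = (\<Sum>x\<in>C. \<Sum>f\<in>N. mult gK f x)" using handshake[OF C_fin finN] C by simp
    also have "\<dots> = (\<Sum>x\<in>C. card {f\<in>N. incident gK f x})" using cK_sum[OF N] by simp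
    also have "\<dots> = (\<Sum>x\<in>C. 1)" using one vC Cs_sub C by (intro sum.cong) auto
    also have "\<dots> = card C" by simp
    finally have "odd (\<Sum>f\<in>N. nin gK f C)" using comp_odd C by simp
    then show ?thesis unfolding b_def using nin_parity[OF finN, of gK C] by simp
  qed
  have finCs': "finite (Cs - {{v}})" using Cs_fin by simp
  have cCs': "card (Cs - {{v}}) = card U - 1" using cardCs vcomp' Cs_fin by simp
  have ge: "card (Cs - {{v}}) \<le> (\<Sum>C\<in>Cs - {{v}}. b C)" using sum_odd_ge[OF finCs'] odd by blast
  have par: "even (\<Sum>C\<in>Cs - {{v}}. b C) \<longleftrightarrow> even (card (Cs - {{v}}))" using sum_odd[OF finCs'] odd by blast
  have "b {v} \<le> 1" using tot ge cCs' cardU by linarith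
  moreover have "b {v} \<noteq> 0"
  proof
    assume "b {v} = 0"
    then have "(\<Sum>C\<in>Cs - {{v}}. b C) = card U" using tot by simp
    moreover obtain k where k: "card U = Suc k" using cardU by (cases "card U") auto
    ultimately have "even (Suc k) \<longleftrightarrow> even k" using par cCs' by simp
    then show False by simp
  qed
  ultimately show ?thesis using bv by simp
qed

end



context S3 begin

abbreviation "Scut \<equiv> Inl ` {e\<in>EH. incident gH e u} \<union> Inr ` EK'"

lemma rho_inj: "inj_on rho Scut"
proof (rule inj_onI)
  fix x y assume x: "x \<in> Scut" and y: "y \<in> Scut" and xy: "rho x = rho y"
  show "x = y"
  proof (cases x; cases y)
    fix e1 e2 assume a: "x = Inl e1" "y = Inl e2"
    then have "e1 \<in> {e\<in>EH. incident gH e u}" "e2 \<in> {e\<in>EH. incident gH e u}" using x y by auto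
    moreover have "sigma e1 = sigma e2" using xy a unfolding rho_def by simp
    ultimately show "x = y" using sigma a unfolding bij_betw_def inj_on_def by blast
  next
    fix e1 f2 assume a: "x = Inl e1" "y = Inr f2"
    then have "e1 \<in> EH" "incident gH e1 u" "\<not> incident gK f2 v" using x y by auto
    moreover have "sigma e1 = f2" using xy a unfolding rho_def by simp
    ultimately show "x = y" using sig by auto
  next
    fix f1 e2 assume a: "x = Inr f1" "y = Inl e2"
    then have "e2 \<in> EH" "incident gH e2 u" "\<not> incident gK f1 v" using x y by auto
    moreover have "sigma e2 = f1" using xy a unfolding rho_def by simp
    ultimately show "x = y" using sig by auto
  next
    fix f1 f2 assume a: "x = Inr f1" "y = Inr f2"
    then show "x = y" using xy unfolding rho_def by simp
  qed
qed

lemma incG_Inl: "e \<in> EH \<Longrightarrow> x \<in> VH - {u} \<Longrightarrow> incident gG (Inl e) (Inl x) \<longleftrightarrow> incident gH e x"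
proof (cases "incident gH e u")
  case True
  assume e: "e \<in> EH" "x \<in> VH - {u}"
  have h: "gH e = (u, oH e) \<or> gH e = (oH e, u)" using incH[OF e(1) True] by auto
  show ?thesis using gG_cut[OF True] h e(2) unfolding incident_def by auto
next
  case False
  then show ?thesis using gG_nin[OF False] unfolding incident_def by (cases "gH e") auto
qed

lemma incG_Inr_Inl: "\<not> incident gG (Inr f) (Inl x)"
  using gG_Inr[of f] unfolding incident_def by (cases "gK f") auto

lemma incG_int: "\<not> incident gH e u \<Longrightarrow> \<not> incident gG (Inl e) (Inr y)"
  using gG_nin unfolding incident_def by (cases "gH e") auto

lemma incG_rho: "z \<in> Scut \<Longrightarrow> y \<in> VK - {v} \<Longrightarrow> incident gG z (Inr y) \<longleftrightarrow> incident gK (rho z) y"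
proof (cases z)
  case (Inl e)
  assume z: "z \<in> Scut" "y \<in> VK - {v}"
  then have e: "e \<in> EH" "incident gH e u" using Inl by auto
  have s: "sigma e \<in> EK" "incident gK (sigma e) v" using sig[OF e] by auto
  have k: "gK (sigma e) = (v, oK (sigma e)) \<or> gK (sigma e) = (oK (sigma e), v)" using incK[OF s] by auto
  show ?thesis using Inl gG_cut[OF e(2)] k z(2) unfolding incident_def rho_def by auto
next
  case (Inr f)
  then show ?thesis using gG_Inr[of f] unfolding incident_def rho_def by (cases "gK f") auto
qed

lemma rho_v: "z \<in> Scut \<Longrightarrow> incident gK (rho z) v \<longleftrightarrow> (\<exists>e. z = Inl e)"
proof (cases z)
  case (Inl e)
  assume "z \<in> Scut"
  then have e: "e \<in> EH" "incident gH e u" using Inl by auto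
  then show ?thesis using sig[OF e] Inl unfolding rho_def by auto
next
  case (Inr f)
  assume "z \<in> Scut"
  then show ?thesis using Inr unfolding rho_def by auto
qed

lemma rho_EK: "z \<in> Scut \<Longrightarrow> rho z \<in> EK"
  using sig unfolding rho_def by auto

lemma image_filter: "{f \<in> h ` A. P f} = h ` {z\<in>A. P (h z)}" by auto

lemma pm_restrict:
  assumes PM: "perfect_matching VG EG gG M"
  shows "perfect_matching VH EH gH {e\<in>EH. Inl e \<in> M}"
proof -
  define MH where "MH = {e\<in>EH. Inl e \<in> M}"
  have MG: "M \<subseteq> EG" and one: "\<And>p. p \<in> VG \<Longrightarrow> card {z\<in>M. incident gG z p} = 1"
    using PM unfolding perfect_matching_def by auto
  have finM: "finite M" using MG finG finite_subset by blast
  have c1: "card {e\<in>MH. incident gH e x} = 1" if x: "x \<in> VH - {u}" for x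
  proof -
    have "(Inl ` {e\<in>MH. incident gH e x} :: ('e + 'f) set) = {z\<in>M. incident gG z (Inl x)}"
    proof
      show "Inl ` {e\<in>MH. incident gH e x} \<subseteq> {z\<in>M. incident gG z (Inl x)}"
        using incG_Inl x unfolding MH_def by auto
      show "{z\<in>M. incident gG z (Inl x)} \<subseteq> Inl ` {e\<in>MH. incident gH e x}"
      proof
        fix z assume z: "z \<in> {z\<in>M. incident gG z (Inl x)}"
        then have zE: "z \<in> EG" using MG by auto
        show "z \<in> Inl ` {e\<in>MH. incident gH e x}"
        proof (cases z)
          case (Inl e)
          then show ?thesis using z zE incG_Inl[of e x] x unfolding MH_def by auto
        next
          case (Inr f)
          then show ?thesis using z incG_Inr_Inl by auto
        qed
      qed
    qed
    moreover have "card (Inl ` {e\<in>MH. incident gH e x} :: ('e + 'f) set) = card {e\<in>MH. incident gH e x}"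
      by (rule card_image) simp
    ultimately show ?thesis using one[of "Inl x"] x by simp
  qed
  have cu: "card {e\<in>MH. incident gH e u} = 1"
  proof -
    define M' where "M' = M \<inter> Scut"
    define N where "N = rho ` M'"
    have M'S: "M' \<subseteq> Scut" unfolding M'_def by auto
    have injM': "inj_on rho M'" using rho_inj M'S inj_on_subset by blast
    have NK: "N \<subseteq> EK" unfolding N_def using rho_EK M'S by auto
    have oneK: "card {f\<in>N. incident gK f y} = 1" if y: "y \<in> VK - {v}" for y
    proof -
      have "{f\<in>N. incident gK f y} = rho ` {z\<in>M'. incident gK (rho z) y}" unfolding N_def by auto
      also have "{z\<in>M'. incident gK (rho z) y} = {z\<in>M. incident gG z (Inr y)}"
      proof
        show "{z\<in>M'. incident gK (rho z) y} \<subseteq> {z\<in>M. incident gG z (Inr y)}"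
          using incG_rho y M'S unfolding M'_def by auto
        show "{z\<in>M. incident gG z (Inr y)} \<subseteq> {z\<in>M'. incident gK (rho z) y}"
        proof
          fix z assume z: "z \<in> {z\<in>M. incident gG z (Inr y)}"
          then have zE: "z \<in> EG" using MG by auto
          have "z \<in> Scut"
          proof (cases z)
            case (Inl e)
            then have "e \<in> EH" using zE by simp
            moreover have "incident gH e u" using incG_int[of e y] z Inl by auto
            ultimately show ?thesis using Inl by auto
          next
            case (Inr f)
            then show ?thesis using zE by auto
          qed
          then show "z \<in> {z\<in>M'. incident gK (rho z) y}" using z incG_rho[of z y] y unfolding M'_def by auto
        qed
      qed
      finally have "{f\<in>N. incident gK f y} = rho ` {z\<in>M. incident gG z (Inr y)}" .
      moreover have "inj_on rho {z\<in>M. incident gG z (Inr y)}"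
        using injM' \<open>{z\<in>M'. incident gK (rho z) y} = {z\<in>M. incident gG z (Inr y)}\<close>
        by (metis (no_types, lifting) inj_on_subset mem_Collect_eq subsetI)
      ultimately have "card {f\<in>N. incident gK f y} = card {z\<in>M. incident gG z (Inr y)}"
        by (simp add: card_image)
      then show ?thesis using one[of "Inr y"] y by simp
    qed
    have cv: "card {f\<in>N. incident gK f v} = 1" by (rule countK[OF NK oneK])
    have "{f\<in>N. incident gK f v} = rho ` {z\<in>M'. incident gK (rho z) v}" unfolding N_def by auto
    also have "{z\<in>M'. incident gK (rho z) v} = Inl ` {e\<in>MH. incident gH e u}"
    proof
      show "{z\<in>M'. incident gK (rho z) v} \<subseteq> Inl ` {e\<in>MH. incident gH e u}"
      proof
        fix z assume z: "z \<in> {z\<in>M'. incident gK (rho z) v}"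
        then have zS: "z \<in> Scut" "z \<in> M" using M'S unfolding M'_def by auto
        then obtain e where e: "z = Inl e" using rho_v z by auto
        then have "e \<in> EH" "incident gH e u" using zS by auto
        then show "z \<in> Inl ` {e\<in>MH. incident gH e u}" using e zS unfolding MH_def by auto
      qed
      show "Inl ` {e\<in>MH. incident gH e u} \<subseteq> {z\<in>M'. incident gK (rho z) v}"
      proof
        fix z :: "'e + 'f" assume "z \<in> Inl ` {e\<in>MH. incident gH e u}"
        then obtain e where e: "z = Inl e" "e \<in> EH" "incident gH e u" "Inl e \<in> M" unfolding MH_def by auto
        then have "z \<in> Scut" by auto
        then show "z \<in> {z\<in>M'. incident gK (rho z) v}" using e rho_v unfolding M'_def by auto
      qed
    qed
    finally have "{f\<in>N. incident gK f v} = rho ` Inl ` {e\<in>MH. incident gH e u}" .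
    moreover have "inj_on rho (Inl ` {e\<in>MH. incident gH e u})"
      using rho_inj by (rule inj_on_subset) (auto simp: MH_def)
    ultimately have c2: "card {f\<in>N. incident gK f v} = card (Inl ` {e\<in>MH. incident gH e u} :: ('e + 'f) set)"
      by (simp add: card_image)
    have c3: "card (Inl ` {e\<in>MH. incident gH e u} :: ('e + 'f) set) = card {e\<in>MH. incident gH e u}" by (rule card_image) simp
    show ?thesis using cv c2 c3 by simp
  qed
  have "\<forall>x\<in>VH. card {e\<in>MH. incident gH e x} = 1"
  proof
    fix x assume "x \<in> VH"
    then show "card {e\<in>MH. incident gH e x} = 1" using c1 cu by (cases "x = u") auto
  qed
  moreover have "MH \<subseteq> EH" unfolding MH_def by auto
  moreover have "\<forall>e\<in>MH. fst (gH e) \<noteq> snd (gH e)" using Hnl unfolding MH_def by auto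
  ultimately show ?thesis unfolding perfect_matching_def MH_def by auto
qed

lemma pmG:
  assumes Hpmi: "pm_index VH EH gH \<ge> 5"
  shows "pm_index VG EG gG \<ge> 5"
  unfolding pm_index_def
proof (rule INF_greatest)
  fix Ms assume Ms: "Ms \<in> {Ms. (\<forall>M\<in>Ms. perfect_matching VG EG gG M) \<and> \<Union>Ms = EG}"
  define r where "r M = {e\<in>EH. Inl e \<in> M}" for M :: "('e + 'f) set"
  have finMs: "finite Ms"
  proof -
    have "Ms \<subseteq> Pow EG" using Ms unfolding perfect_matching_def by auto
    then show ?thesis using finG(2) finite_subset by blast
  qed
  have "r ` Ms \<in> {Ms. (\<forall>M\<in>Ms. perfect_matching VH EH gH M) \<and> \<Union>Ms = EH}"
  proof (intro CollectI conjI ballI)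
    fix M' assume "M' \<in> r ` Ms"
    then show "perfect_matching VH EH gH M'" using Ms pm_restrict unfolding r_def by auto
  next
    show "\<Union>(r ` Ms) = EH"
    proof
      show "\<Union>(r ` Ms) \<subseteq> EH" unfolding r_def by auto
      show "EH \<subseteq> \<Union>(r ` Ms)"
      proof
        fix e assume e: "e \<in> EH"
        then have "Inl e \<in> \<Union>Ms" using Ms by simp
        then obtain M where "M \<in> Ms" "Inl e \<in> M" by auto
        then show "e \<in> \<Union>(r ` Ms)" using e unfolding r_def by auto
      qed
    qed
  qed
  then have "pm_index VH EH gH \<le> enat (card (r ` Ms))" unfolding pm_index_def by (rule INF_lower)
  moreover have "card (r ` Ms) \<le> card Ms" by (rule card_image_le[OF finMs])
  ultimately have "pm_index VH EH gH \<le> enat (card Ms)" by (meson enat_ord_simps(1) order_trans)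
  then show "5 \<le> enat (card Ms)" using Hpmi by (rule order_trans[rotated])
qed

end

theorem theorem6p8:
  fixes VH :: "'a set" and EH :: "'e set" and gH :: "'e \<Rightarrow> 'a \<times> 'a" and u :: 'a
    and VK :: "'b set" and EK :: "'f set" and gK :: "'f \<Rightarrow> 'b \<times> 'b" and v :: 'b
    and U :: "'b set" and sigma :: "'e \<Rightarrow> 'f"
  assumes H2: "two_connected VH EH gH" and Hcub: "cubic VH EH gH"
    and Hsnark: "snark VH EH gH" and Hpmi: "pm_index VH EH gH \<ge> 5"
    and K2: "two_connected VK EK gK" and Kcub: "cubic VK EK gK"
    and Kcol: "three_edge_colourable VK EK gK"
    and KU: "bipartising_set VK EK gK U"
    and u: "u \<in> VH" and v: "v \<in> VK"
    and vcomp: "{v} \<in> quasi_partite_set VK EK gK U"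
    and sigma: "bij_betw sigma {e\<in>EH. incident gH e u} {f\<in>EK. incident gK f v}"
  shows "pm_index (sum3_V VH u VK v) (sum3_E EH gH u EK gK v) (sum3_g gH u gK v sigma) \<ge> 5
    \<and> quasi_bipartite (sum3_V VH u VK v) (sum3_E EH gH u EK gK v) (sum3_g gH u gK v sigma)
    \<and> bipartising_set (sum3_V VH u VK v) (sum3_E EH gH u EK gK v) (sum3_g gH u gK v sigma) (Inr ` U)
    \<and> quasi_partite_set (sum3_V VH u VK v) (sum3_E EH gH u EK gK v) (sum3_g gH u gK v sigma) (Inr ` U)
        = insert (Inl ` (VH - {u})) ((\<lambda>C. Inr ` C) ` (quasi_partite_set VK EK gK U - {{v}}))"
  proof -
  have Knl: "\<forall>f\<in>EK. fst (gK f) \<noteq> snd (gK f)" using Kcol unfolding three_edge_colourable_def by auto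
  interpret S3 VH EH gH u VK EK gK v U sigma
    by unfold_locales (use H2 Hcub K2 Kcub Knl KU u v vcomp sigma in auto)
  have q: "quasi_partite_set (sum3_V VH u VK v) (sum3_E EH gH u EK gK v) (sum3_g gH u gK v sigma) (Inr ` U)
        = insert (Inl ` (VH - {u})) ((\<lambda>C. Inr ` C) ` (quasi_partite_set VK EK gK U - {{v}}))"
    unfolding quasi_partite_set_def by (rule componentsG)
  have "quasi_bipartite (sum3_V VH u VK v) (sum3_E EH gH u EK gK v) (sum3_g gH u gK v sigma)"
    unfolding quasi_bipartite_def using twoG cubicG bipG by blast
  then show ?thesis using pmG[OF Hpmi] bipG q by blast
qed

end
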